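(* Let $X$ be a real Banach space ordered by a generating and normal cone $K$. Let $A$ be a bounded linear operator with $A(K)\subseteq K$ which is semi-nonsupporting and such that $r(A)$ is a pole of the resolvent map $\lambda\mapsto(\lambda I-A)^{-1}$. Assume $A=T+F$, where $T,F$ are bounded linear operators with $T(K)\subseteq K$, $F(K)\subseteq K$, $r(T)<1$, and $T\neq 0$. Define $R_0:=r\big(F(I-T)^{-1}\big)$, assume $R_0>0$, and assume $R_0$ is a pole of the resolvent map of $F(I-T)^{-1}$. Then exactly one of the following holds: (a) $R_0>r(A)>1$; (b) $R_0=r(A)=1$; (c) $R_0<r(A)<1$.
   Context: A cone $K\subseteq X$ is a closed convex set such that $\alpha x\in K$ whenever $x\in K,\ \alpha\ge 0$, and such that $x\in K$, $-x\in K$ imply $x=0$. $K$ is generating if $X=K-K$, and normal if there is $\gamma>0$ such that $0\le x\le y$ implies $\|x\|\le\gamma\|y\|$, where $x\le y$ means $y-x\in K$. The dual cone is $K^*=\{f\in X^*: f(x)\ge 0\ \forall x\in K\}$. A bounded operator $B$ with $B(K)\subseteq K$ is semi-nonsupporting if for every pair $(x,f)$ with $x\in K\setminus\{0\}$, $f\in K^*\setminus\{0\}$ there is $n=n(x,f)\in\mathbb N$ with $f(B^nx)>0$. Spectrum, resolvent map $\lambda\mapsto(\lambda I-B)^{-1}$ on the resolvent set, and spectral radius $r(\cdot)$ are taken for the complexification of the operator on $X+iX$. *)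

theory Defs
  imports "HOL-Analysis.Analysis"
begin

definition is_cone :: "'a::real_normed_vector set \<Rightarrow> bool" where
  "is_cone K \<longleftrightarrow> closed K \<and> convex K \<and>
     (\<forall>x\<in>K. \<forall>\<alpha>::real. \<alpha> \<ge> 0 \<longrightarrow> \<alpha> *\<^sub>R x \<in> K) \<and>
     (\<forall>x. x \<in> K \<and> - x \<in> K \<longrightarrow> x = 0)"

definition generating_cone :: "'a::real_normed_vector set \<Rightarrow> bool" where
  "generating_cone K \<longleftrightarrow> (\<forall>x. \<exists>u\<in>K. \<exists>v\<in>K. x = u - v)"

text \<open>x \<le> y means y - x \<in> K; 0 \<le> x \<le> y implies norm x \<le> gamma * norm y.\<close>
definition normal_cone :: "'a::real_normed_vector set \<Rightarrow> bool" where
  "normal_cone K \<longleftrightarrow> (\<exists>\<gamma>>0. \<forall>x y. x \<in> K \<and> y - x \<in> K \<longrightarrow> norm x \<le> \<gamma> * norm y)"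

definition dual_cone :: "'a::real_normed_vector set \<Rightarrow> ('a \<Rightarrow>\<^sub>L real) set" where
  "dual_cone K = {f. \<forall>x\<in>K. blinfun_apply f x \<ge> 0}"

definition positive_op :: "'a::real_normed_vector set \<Rightarrow> ('a \<Rightarrow>\<^sub>L 'a) \<Rightarrow> bool" where
  "positive_op K B \<longleftrightarrow> (\<forall>x\<in>K. blinfun_apply B x \<in> K)"

definition semi_nonsupporting :: "'a::real_normed_vector set \<Rightarrow> ('a \<Rightarrow>\<^sub>L 'a) \<Rightarrow> bool" where
  "semi_nonsupporting K B \<longleftrightarrow> positive_op K B \<and>
     (\<forall>x \<in> K - {0}. \<forall>f \<in> dual_cone K - {0}. \<exists>n::nat. n \<ge> 1 \<and> blinfun_apply f ((blinfun_apply B ^^ n) x) > 0)"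

text \<open>(z I - B_C) acting on x + i y, represented as the pair (x, y).\<close>
definition cshift :: "('a::banach \<Rightarrow>\<^sub>L 'a) \<Rightarrow> complex \<Rightarrow> 'a \<times> 'a \<Rightarrow> 'a \<times> 'a" where
  "cshift B z = (\<lambda>(x, y). (Re z *\<^sub>R x - Im z *\<^sub>R y - blinfun_apply B x, Im z *\<^sub>R x + Re z *\<^sub>R y - blinfun_apply B y))"

definition in_resolvent_set :: "('a::banach \<Rightarrow>\<^sub>L 'a) \<Rightarrow> complex \<Rightarrow> bool" where
  "in_resolvent_set B z \<longleftrightarrow>
     (\<exists>S :: ('a \<times> 'a) \<Rightarrow>\<^sub>L ('a \<times> 'a). (\<forall>p. blinfun_apply S (cshift B z p) = p) \<and> (\<forall>p. cshift B z (blinfun_apply S p) = p))"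

definition op_spectrum :: "('a::banach \<Rightarrow>\<^sub>L 'a) \<Rightarrow> complex set" where
  "op_spectrum B = {z. \<not> in_resolvent_set B z}"

definition op_spectral_radius :: "('a::banach \<Rightarrow>\<^sub>L 'a) \<Rightarrow> real" where
  "op_spectral_radius B = Sup (cmod ` op_spectrum B)"

text \<open>The resolvent (z I - B_C)^{-1} (meaningful on the resolvent set).\<close>
definition resolvent :: "('a::banach \<Rightarrow>\<^sub>L 'a) \<Rightarrow> complex \<Rightarrow> ('a \<times> 'a) \<Rightarrow>\<^sub>L ('a \<times> 'a)" where
  "resolvent B z = (SOME S. (\<forall>p. blinfun_apply S (cshift B z p) = p) \<and> (\<forall>p. cshift B z (blinfun_apply S p) = p))"

text \<open>z0 is a pole of the resolvent: an isolated point of the spectrum near which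
  (z - z0)^m (zI - B)^{-1} stays bounded for some m (finitely many negative Laurent terms).\<close>
definition resolvent_pole :: "('a::banach \<Rightarrow>\<^sub>L 'a) \<Rightarrow> complex \<Rightarrow> bool" where
  "resolvent_pole B z0 \<longleftrightarrow> z0 \<in> op_spectrum B \<and>
     (\<exists>\<epsilon>>0. op_spectrum B \<inter> ball z0 \<epsilon> = {z0} \<and>
        (\<exists>m::nat. \<exists>C. \<forall>z \<in> ball z0 \<epsilon> - {z0}. cmod (z - z0) ^ m * norm (resolvent B z) \<le> C))"

definition op_inverse :: "('a::banach \<Rightarrow>\<^sub>L 'a) \<Rightarrow> 'a \<Rightarrow>\<^sub>L 'a" where
  "op_inverse B = (SOME S. S o\<^sub>L B = id_blinfun \<and> B o\<^sub>L S = id_blinfun)"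

end

theory Submission
  imports Defs "HOL-Complex_Analysis.Complex_Analysis"
begin


definition sublin :: "('a::real_vector \<Rightarrow> real) \<Rightarrow> bool" where
  "sublin p \<longleftrightarrow> (\<forall>x y. p (x+y) \<le> p x + p y) \<and> (\<forall>c x. c \<ge> 0 \<longrightarrow> p (c *\<^sub>R x) = c * p x)"

definition hbgood :: "('a::real_vector \<Rightarrow> real) \<Rightarrow> 'a \<Rightarrow> ('a \<times> real) set \<Rightarrow> bool" where
  "hbgood p w G \<longleftrightarrow> (\<forall>x a b. (x,a)\<in>G \<longrightarrow> (x,b)\<in>G \<longrightarrow> a=b) \<and> (w, p w) \<in> G \<and>
     (\<forall>x a y b. (x,a)\<in>G \<longrightarrow> (y,b)\<in>G \<longrightarrow> (x+y, a+b)\<in>G) \<and>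
     (\<forall>x a c. (x,a)\<in>G \<longrightarrow> (c *\<^sub>R x, c*a)\<in>G) \<and> (\<forall>x a. (x,a)\<in>G \<longrightarrow> a \<le> p x)"

lemma sublin_0: "sublin p \<Longrightarrow> p 0 = 0"
  unfolding sublin_def by (metis mult_zero_left order_refl scale_zero_left)

lemma sublin_neg: "sublin p \<Longrightarrow> - p x \<le> p (- x)"
proof -
  assume s: "sublin p"
  have "p (x + - x) \<le> p x + p (- x)" using s unfolding sublin_def by blast
  thus ?thesis using sublin_0[OF s] by simp
qed

lemma sublin_below: "sublin p \<Longrightarrow> c * p w \<le> p (c *\<^sub>R w)"
proof (cases "c \<ge> 0")
  case True assume s: "sublin p"
  thus ?thesis using True unfolding sublin_def by simp
next
  case False assume s: "sublin p"
  have "p (c *\<^sub>R w) = p ((-c) *\<^sub>R (- w))" by simp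
  also have "\<dots> = (-c) * p (- w)"
  proof -
    have h: "\<forall>c\<ge>0. \<forall>x. p (c *\<^sub>R x) = c * p x" using s unfolding sublin_def by blast
    show ?thesis using h[rule_format, of "-c" "-w"] False by simp
  qed
  finally have e: "p (c *\<^sub>R w) = (-c) * p (- w)" .
  have "(-c) * (- p w) \<le> (-c) * p (- w)"
    using sublin_neg[OF s, of w] False by (intro mult_left_mono) auto
  thus ?thesis using e by simp
qed

lemma hbgood_base:
  assumes s: "sublin p"
  shows "hbgood p w {(c *\<^sub>R w, c * p w) | c. True}"
  unfolding hbgood_def
proof (intro conjI allI impI)
  fix x a b assume "(x, a) \<in> {(c *\<^sub>R w, c * p w) |c. True}" "(x, b) \<in> {(c *\<^sub>R w, c * p w) |c. True}"
  then obtain c d where cd: "x = c *\<^sub>R w" "a = c * p w" "x = d *\<^sub>R w" "b = d * p w" by blast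
  show "a = b"
  proof (cases "w = 0")
    case True thus ?thesis using cd sublin_0[OF s] by simp
  next
    case False
    hence "c = d" using cd by (metis scaleR_cancel_right)
    thus ?thesis using cd by simp
  qed
next
  show "(w, p w) \<in> {(c *\<^sub>R w, c * p w) |c. True}" by (rule CollectI, rule exI[of _ 1]) simp
next
  fix x a y b assume "(x, a) \<in> {(c *\<^sub>R w, c * p w) |c. True}" "(y, b) \<in> {(c *\<^sub>R w, c * p w) |c. True}"
  then obtain c d where cd: "x = c *\<^sub>R w" "a = c * p w" "y = d *\<^sub>R w" "b = d * p w" by auto
  show "(x + y, a + b) \<in> {(c *\<^sub>R w, c * p w) |c. True}"
    by (rule CollectI, rule exI[of _ "c+d"]) (simp add: cd scaleR_add_left distrib_right)
next
  fix x a c assume "(x, a) \<in> {(c *\<^sub>R w, c * p w) |c. True}"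
  then obtain d where cd: "x = d *\<^sub>R w" "a = d * p w" by auto
  show "(c *\<^sub>R x, c * a) \<in> {(c *\<^sub>R w, c * p w) |c. True}"
    by (rule CollectI, rule exI[of _ "c*d"]) (simp add: cd)
next
  fix x a assume "(x, a) \<in> {(c *\<^sub>R w, c * p w) |c. True}"
  then obtain d where cd: "x = d *\<^sub>R w" "a = d * p w" by auto
  show "a \<le> p x" using cd sublin_below[OF s] by simp
qed

lemma hbgoodD:
  assumes "hbgood p w G"
  shows "\<And>x a b. (x,a)\<in>G \<Longrightarrow> (x,b)\<in>G \<Longrightarrow> a=b" "(w, p w) \<in> G"
    "\<And>x a y b. (x,a)\<in>G \<Longrightarrow> (y,b)\<in>G \<Longrightarrow> (x+y, a+b)\<in>G"
    "\<And>x a c. (x,a)\<in>G \<Longrightarrow> (c *\<^sub>R x, c*a)\<in>G" "\<And>x a. (x,a)\<in>G \<Longrightarrow> a \<le> p x"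
  using assms unfolding hbgood_def by blast+

lemma hbgood_chain:
  assumes C: "C \<in> chains {G. hbgood p w G}" and ne: "C \<noteq> {}"
  shows "hbgood p w (\<Union>C)"
proof -
  have CA: "\<And>G. G \<in> C \<Longrightarrow> hbgood p w G" using C by (auto simp: chains_def)
  have ch: "\<And>G H. G \<in> C \<Longrightarrow> H \<in> C \<Longrightarrow> G \<subseteq> H \<or> H \<subseteq> G" using C by (auto simp: chains_def chain_subset_def)
  show ?thesis unfolding hbgood_def
  proof (intro conjI allI impI)
    fix x a b assume "(x, a) \<in> \<Union> C" "(x, b) \<in> \<Union> C"
    then obtain G H where GH: "G \<in> C" "H \<in> C" "(x,a) \<in> G" "(x,b) \<in> H" by auto
    show "a = b"
    proof (cases "G \<subseteq> H")
      case True thus ?thesis using GH hbgoodD(1)[OF CA[of H]] by blast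
    next
      case False hence "H \<subseteq> G" using ch GH by blast
      thus ?thesis using GH hbgoodD(1)[OF CA[of G]] by blast
    qed
  next
    obtain G where "G \<in> C" using ne by auto
    thus "(w, p w) \<in> \<Union> C" using hbgoodD(2)[OF CA] by blast
  next
    fix x a y b assume "(x, a) \<in> \<Union> C" "(y, b) \<in> \<Union> C"
    then obtain G H where GH: "G \<in> C" "H \<in> C" "(x,a) \<in> G" "(y,b) \<in> H" by auto
    show "(x + y, a + b) \<in> \<Union> C"
    proof (cases "G \<subseteq> H")
      case True thus ?thesis using GH hbgoodD(3)[OF CA[of H]] by blast
    next
      case False hence "H \<subseteq> G" using ch GH by blast
      thus ?thesis using GH hbgoodD(3)[OF CA[of G]] by blast
    qed
  next
    fix x a c assume "(x, a) \<in> \<Union> C"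
    then obtain G where "G \<in> C" "(x,a) \<in> G" by auto
    thus "(c *\<^sub>R x, c * a) \<in> \<Union> C" using hbgoodD(4)[OF CA] by blast
  next
    fix x a assume "(x, a) \<in> \<Union> C"
    then obtain G where "G \<in> C" "(x,a) \<in> G" by auto
    thus "a \<le> p x" using hbgoodD(5)[OF CA] by blast
  qed
qed

lemma hbgood_extend:
  assumes s: "sublin p" and M: "hbgood p w M" and x0: "\<And>a. (x0, a) \<notin> M"
  shows "\<exists>M'. hbgood p w M' \<and> M \<subseteq> M' \<and> M' \<noteq> M"
proof -
  have fnc: "\<And>x a b. (x,a)\<in>M \<Longrightarrow> (x,b)\<in>M \<Longrightarrow> a=b"
   and add: "\<And>x a y b. (x,a)\<in>M \<Longrightarrow> (y,b)\<in>M \<Longrightarrow> (x+y, a+b)\<in>M"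
   and scl: "\<And>x a c. (x,a)\<in>M \<Longrightarrow> (c *\<^sub>R x, c*a)\<in>M"
   and bnd: "\<And>x a. (x,a)\<in>M \<Longrightarrow> a \<le> p x"
   and wM: "(w, p w) \<in> M" using hbgoodD[OF M] by blast+
  have padd: "\<And>x y. p (x+y) \<le> p x + p y" and phom: "\<And>c x. c \<ge> 0 \<Longrightarrow> p (c *\<^sub>R x) = c * p x"
    using s unfolding sublin_def by blast+
  define S where "S = {a - p (y - x0) | y a. (y,a) \<in> M}"
  have key: "a - p (y - x0) \<le> p (z + x0) - b" if "(y,a)\<in>M" "(z,b)\<in>M" for y a z b
  proof -
    have "a + b \<le> p (y + z)" using bnd add that by blast
    also have "\<dots> = p ((y - x0) + (z + x0))" by simp
    also have "\<dots> \<le> p (y - x0) + p (z + x0)" by (rule padd)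
    finally show ?thesis by simp
  qed
  define \<xi> where "\<xi> = Sup S"
  have Sne: "S \<noteq> {}" using wM unfolding S_def by blast
  have Sbdd: "bdd_above S" unfolding S_def bdd_above_def using key[OF _ wM] by blast
  have lo: "a - p (y - x0) \<le> \<xi>" if "(y,a)\<in>M" for y a
    unfolding \<xi>_def by (rule cSup_upper[OF _ Sbdd]) (use that S_def in blast)
  have hi: "\<xi> \<le> p (z + x0) - b" if "(z,b)\<in>M" for z b
    unfolding \<xi>_def by (rule cSup_least[OF Sne]) (use that key S_def in blast)
  define M' where "M' = {(y + t *\<^sub>R x0, a + t * \<xi>) | y a t. (y,a) \<in> M}"
  have "hbgood p w M'" unfolding hbgood_def
  proof (intro conjI allI impI)
    fix x a b assume "(x, a) \<in> M'" "(x, b) \<in> M'"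
    then obtain y1 a1 t1 y2 a2 t2 where e: "x = y1 + t1 *\<^sub>R x0" "a = a1 + t1 * \<xi>" "(y1,a1)\<in>M"
      "x = y2 + t2 *\<^sub>R x0" "b = a2 + t2 * \<xi>" "(y2,a2)\<in>M" unfolding M'_def by blast
    have "t1 = t2"
    proof (rule ccontr)
      assume ne: "t1 \<noteq> t2"
      have "(y1 + (-1) *\<^sub>R y2, a1 + (-1) * a2) \<in> M" using add scl e by blast
      hence "((1/(t2 - t1)) *\<^sub>R (y1 + (-1) *\<^sub>R y2), (1/(t2-t1)) * (a1 + (-1) * a2)) \<in> M" using scl by blast
      moreover have "(1/(t2 - t1)) *\<^sub>R (y1 + (-1) *\<^sub>R y2) = x0"
      proof -
        have "y1 - y2 = (t2 - t1) *\<^sub>R x0" using e by (simp add: algebra_simps)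
        thus ?thesis using ne by simp
      qed
      ultimately show False using x0 by simp
    qed
    hence "y1 = y2" using e by simp
    thus "a = b" using e fnc \<open>t1 = t2\<close> by blast
  next
    show "(w, p w) \<in> M'" unfolding M'_def using wM by force
  next
    fix x a y b assume "(x, a) \<in> M'" "(y, b) \<in> M'"
    then obtain y1 a1 t1 y2 a2 t2 where e: "x = y1 + t1 *\<^sub>R x0" "a = a1 + t1 * \<xi>" "(y1,a1)\<in>M"
      "y = y2 + t2 *\<^sub>R x0" "b = a2 + t2 * \<xi>" "(y2,a2)\<in>M" unfolding M'_def by blast
    have "(y1 + y2, a1 + a2) \<in> M" using add e by blast
    moreover have "x + y = (y1 + y2) + (t1 + t2) *\<^sub>R x0" "a + b = (a1 + a2) + (t1 + t2) * \<xi>"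
      using e by (auto simp: algebra_simps)
    ultimately show "(x + y, a + b) \<in> M'" unfolding M'_def by blast
  next
    fix x a c assume "(x, a) \<in> M'"
    then obtain y1 a1 t1 where e: "x = y1 + t1 *\<^sub>R x0" "a = a1 + t1 * \<xi>" "(y1,a1)\<in>M"
      unfolding M'_def by auto
    have "(c *\<^sub>R y1, c * a1) \<in> M" using scl e by blast
    moreover have "c *\<^sub>R x = c *\<^sub>R y1 + (c * t1) *\<^sub>R x0" "c * a = c * a1 + (c * t1) * \<xi>"
      using e by (auto simp: algebra_simps)
    ultimately show "(c *\<^sub>R x, c * a) \<in> M'" unfolding M'_def by blast
  next
    fix x a assume "(x, a) \<in> M'"
    then obtain y a1 t where e: "x = y + t *\<^sub>R x0" "a = a1 + t * \<xi>" "(y,a1)\<in>M"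
      unfolding M'_def by auto
    show "a \<le> p x"
    proof (cases t "0::real" rule: linorder_cases)
      case equal thus ?thesis using e bnd by simp
    next
      case greater
      have "((1/t) *\<^sub>R y, (1/t) * a1) \<in> M" using scl e by blast
      hence "\<xi> \<le> p ((1/t) *\<^sub>R y + x0) - (1/t) * a1" by (rule hi)
      also have "(1/t) *\<^sub>R y + x0 = (1/t) *\<^sub>R x" using e greater by (simp add: algebra_simps)
      also have "p ((1/t) *\<^sub>R x) = (1/t) * p x" using phom greater by simp
      finally have "t * \<xi> \<le> t * ((1/t) * p x - (1/t) * a1)" using greater by (intro mult_left_mono) auto
      thus ?thesis using e greater by (simp add: algebra_simps)
    next
      case less
      define s where "s = - t"
      have sp: "s > 0" using less s_def by simp
      have "((1/s) *\<^sub>R y, (1/s) * a1) \<in> M" using scl e by blast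
      hence "(1/s) * a1 - p ((1/s) *\<^sub>R y - x0) \<le> \<xi>" by (rule lo)
      also have "(1/s) *\<^sub>R y - x0 = (1/s) *\<^sub>R x" using e sp s_def by (simp add: algebra_simps)
      also have "p ((1/s) *\<^sub>R x) = (1/s) * p x" using phom sp by simp
      finally have "s * ((1/s) * a1 - (1/s) * p x) \<le> s * \<xi>" using sp by (intro mult_left_mono) auto
      thus ?thesis using e sp s_def by (simp add: algebra_simps)
    qed
  qed
  moreover have "M \<subseteq> M'"
  proof
    fix q assume "q \<in> M"
    then obtain y a where "q = (y,a)" "(y,a) \<in> M" by (cases q) auto
    moreover have "(y, a) = (y + 0 *\<^sub>R x0, a + 0 * \<xi>)" by simp
    ultimately show "q \<in> M'" unfolding M'_def by blast
  qed
  moreover have "(x0, \<xi>) \<in> M'"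
  proof -
    have "(0 *\<^sub>R w, 0 * p w) \<in> M" using scl wM by blast
    hence "(0, 0) \<in> M" by simp
    moreover have "(x0, \<xi>) = (0 + 1 *\<^sub>R x0, 0 + 1 * \<xi>)" by simp
    ultimately show ?thesis unfolding M'_def by blast
  qed
  ultimately show ?thesis using x0 by blast
qed

theorem hahn_banach_sublin:
  fixes p :: "'a::real_vector \<Rightarrow> real"
  assumes s: "sublin p"
  shows "\<exists>f. linear f \<and> (\<forall>x. f x \<le> p x) \<and> f w = p w"
proof -
  have "\<forall>C\<in>chains {G. hbgood p w G}. \<exists>U\<in>{G. hbgood p w G}. \<forall>X\<in>C. X \<subseteq> U"
  proof
    fix C assume C: "C \<in> chains {G. hbgood p w G}"
    show "\<exists>U\<in>{G. hbgood p w G}. \<forall>X\<in>C. X \<subseteq> U"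
    proof (cases "C = {}")
      case True thus ?thesis using hbgood_base[OF s] by blast
    next
      case False thus ?thesis using hbgood_chain[OF C False] by blast
    qed
  qed
  from Zorn_Lemma2[OF this] obtain M where M: "hbgood p w M"
    and max: "\<And>X. hbgood p w X \<Longrightarrow> M \<subseteq> X \<Longrightarrow> X = M" by blast
  have fnc: "\<And>x a b. (x,a)\<in>M \<Longrightarrow> (x,b)\<in>M \<Longrightarrow> a=b"
   and add: "\<And>x a y b. (x,a)\<in>M \<Longrightarrow> (y,b)\<in>M \<Longrightarrow> (x+y, a+b)\<in>M"
   and scl: "\<And>x a c. (x,a)\<in>M \<Longrightarrow> (c *\<^sub>R x, c*a)\<in>M"
   and bnd: "\<And>x a. (x,a)\<in>M \<Longrightarrow> a \<le> p x"
   and wM: "(w, p w) \<in> M" using hbgoodD[OF M] by blast+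
  have tot: "\<exists>a. (x,a) \<in> M" for x
  proof (rule ccontr)
    assume "\<nexists>a. (x, a) \<in> M"
    then obtain M' where "hbgood p w M'" "M \<subseteq> M'" "M' \<noteq> M" using hbgood_extend[OF s M] by blast
    thus False using max by blast
  qed
  define f where "f x = (THE a. (x,a) \<in> M)" for x
  have fM: "(x, f x) \<in> M" for x
  proof -
    obtain a where a: "(x,a) \<in> M" using tot by blast
    have "(THE a. (x,a) \<in> M) = a" by (rule the_equality) (use a fnc in blast)+
    thus ?thesis using a f_def by simp
  qed
  have feq: "(x,a) \<in> M \<Longrightarrow> f x = a" for x a using fnc fM by blast
  have "linear f"
  proof (rule linearI)
    fix x y show "f (x + y) = f x + f y" using feq add fM by blast
  next
    fix c x show "f (c *\<^sub>R x) = c *\<^sub>R f x" using feq scl fM by simp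
  qed
  moreover have "\<forall>x. f x \<le> p x" using bnd fM by blast
  moreover have "f w = p w" using feq wM by blast
  ultimately show ?thesis by blast
qed


lemma le_infdist: "A \<noteq> {} \<Longrightarrow> (\<And>a. a \<in> A \<Longrightarrow> d \<le> dist x a) \<Longrightarrow> d \<le> infdist x A"
  by (simp add: infdist_notempty cINF_greatest)

lemma hb_norming:
  fixes v :: "'a::real_normed_vector"
  shows "\<exists>\<phi>::'a \<Rightarrow>\<^sub>L real. norm \<phi> \<le> 1 \<and> blinfun_apply \<phi> v = norm v"
proof -
  have "sublin (norm :: 'a \<Rightarrow> real)" unfolding sublin_def by (auto simp: norm_triangle_ineq)
  from hahn_banach_sublin[OF this, of v] obtain f where f: "linear f" "\<And>x. f x \<le> norm x" "f v = norm v" by blast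
  have ab: "\<bar>f x\<bar> \<le> norm x" for x
  proof -
    have "- f x = f (- x)" using f(1) by (simp add: linear_neg)
    also have "\<dots> \<le> norm x" using f(2)[of "-x"] by simp
    finally show ?thesis using f(2)[of x] by simp
  qed
  have bl: "bounded_linear f"
    using f(1) ab by (intro bounded_linear_intro[of f 1]) (auto simp: linear_add linear_scale)
  show ?thesis
  proof (intro exI conjI)
    show "norm (Blinfun f) \<le> 1"
      by (rule norm_blinfun_bound) (use ab bl in \<open>auto simp: bounded_linear_Blinfun_apply\<close>)
    show "blinfun_apply (Blinfun f) v = norm v" using bl f(3) by (simp add: bounded_linear_Blinfun_apply)
  qed
qed

lemma hb_cone_sep:
  fixes K :: "'a::real_normed_vector set"
  assumes cl: "closed K" and z: "0 \<in> K" and ad: "\<And>x y. x \<in> K \<Longrightarrow> y \<in> K \<Longrightarrow> x + y \<in> K"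
    and sc: "\<And>c x. c \<ge> 0 \<Longrightarrow> x \<in> K \<Longrightarrow> c *\<^sub>R x \<in> K" and w: "w \<notin> K"
  shows "\<exists>\<phi>::'a \<Rightarrow>\<^sub>L real. (\<forall>k\<in>K. blinfun_apply \<phi> k \<ge> 0) \<and> blinfun_apply \<phi> w < 0"
proof -
  have ne: "K \<noteq> {}" using z by blast
  define q where "q x = infdist x K" for x
  have sub: "q (x + y) \<le> q x + q y" for x y
  proof -
    have "q (x+y) - dist y k2 \<le> dist x k1" if "k1 \<in> K" "k2 \<in> K" for k1 k2
    proof -
      have "q (x+y) \<le> dist (x+y) (k1+k2)" unfolding q_def using ad that by (intro infdist_le) auto
      also have "\<dots> \<le> dist x k1 + dist y k2" by (rule dist_triangle_add)
      finally show ?thesis by simp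
    qed
    hence "q (x+y) - dist y k2 \<le> q x" if "k2 \<in> K" for k2
      unfolding q_def using that ne by (intro le_infdist) auto
    hence "q (x+y) - q x \<le> q y" unfolding q_def using ne by (intro le_infdist) (auto simp: algebra_simps q_def)
    thus ?thesis by simp
  qed
  have hom: "q (c *\<^sub>R x) = c * q x" if c: "c \<ge> 0" for c x
  proof (cases "c = 0")
    case True thus ?thesis using z by (simp add: q_def)
  next
    case False hence cp: "c > 0" using c by simp
    have "q (c *\<^sub>R x) / c \<le> dist x k" if "k \<in> K" for k
    proof -
      have "q (c *\<^sub>R x) \<le> dist (c *\<^sub>R x) (c *\<^sub>R k)" unfolding q_def using sc that c by (intro infdist_le) auto
      also have "\<dots> = c * dist x k" using cp by (simp add: dist_norm scaleR_diff_right[symmetric])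
      finally show ?thesis using cp by (simp add: divide_simps mult.commute)
    qed
    hence 1: "q (c *\<^sub>R x) / c \<le> q x" unfolding q_def using ne by (intro le_infdist) auto
    have "c * q x \<le> dist (c *\<^sub>R x) k" if "k \<in> K" for k
    proof -
      have "q x \<le> dist x ((1/c) *\<^sub>R k)" unfolding q_def using sc that cp by (intro infdist_le) auto
      hence "c * q x \<le> c * dist x ((1/c) *\<^sub>R k)" using cp by simp
      also have "c * dist x ((1/c) *\<^sub>R k) = dist (c *\<^sub>R x) k"
      proof -
        have "c * dist x ((1/c) *\<^sub>R k) = norm (c *\<^sub>R (x - (1/c) *\<^sub>R k))" using cp by (simp add: dist_norm)
        also have "c *\<^sub>R (x - (1/c) *\<^sub>R k) = c *\<^sub>R x - k" using cp by (simp add: algebra_simps)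
        finally show ?thesis by (simp add: dist_norm)
      qed
      finally show ?thesis .
    qed
    hence 2: "c * q x \<le> q (c *\<^sub>R x)" unfolding q_def using ne by (intro le_infdist) auto
    from 1 2 cp show ?thesis by (simp add: divide_simps mult.commute)
  qed
  have "sublin q" unfolding sublin_def using sub hom by blast
  from hahn_banach_sublin[OF this, of w] obtain f where f: "linear f" "\<And>x. f x \<le> q x" "f w = q w" by blast
  have qn: "q x \<le> norm x" for x unfolding q_def using infdist_le[OF z, of x] by simp
  have ab: "\<bar>f x\<bar> \<le> norm x" for x
  proof -
    have "- f x = f (- x)" using f(1) by (simp add: linear_neg)
    also have "\<dots> \<le> norm x" using f(2)[of "-x"] qn[of "-x"] by simp
    finally show ?thesis using f(2)[of x] qn[of x] by simp
  qed
  have bl: "bounded_linear (\<lambda>x. - f x)"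
    using f(1) ab by (intro bounded_linear_intro[of _ 1]) (auto simp: linear_add linear_scale)
  have qw: "q w > 0" unfolding q_def using infdist_pos_not_in_closed[OF cl ne w] by simp
  show ?thesis
  proof (intro exI conjI ballI)
    fix k assume "k \<in> K"
    hence "f k \<le> 0" using f(2)[of k] by (simp add: q_def)
    thus "0 \<le> blinfun_apply (Blinfun (\<lambda>x. - f x)) k" using bl by (simp add: bounded_linear_Blinfun_apply)
  next
    show "blinfun_apply (Blinfun (\<lambda>x. - f x)) w < 0" using bl f(3) qw by (simp add: bounded_linear_Blinfun_apply)
  qed
qed


lemma bc_assoc: "(a o\<^sub>L b) o\<^sub>L c = a o\<^sub>L (b o\<^sub>L c)"
  by (rule blinfun_eqI) simp

lemma bc_id_left[simp]: "id_blinfun o\<^sub>L a = a" by (rule blinfun_eqI) simp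
lemma bc_id_right[simp]: "a o\<^sub>L id_blinfun = a" by (rule blinfun_eqI) simp

lemma bc_diff_left: "(a - b) o\<^sub>L c = (a o\<^sub>L c) - (b o\<^sub>L c)"
  by (rule blinfun_eqI) (simp add: blinfun.bilinear_simps)
lemma bc_diff_right: "c o\<^sub>L (a - b) = (c o\<^sub>L a) - (c o\<^sub>L b)"
  by (rule blinfun_eqI) (simp add: blinfun.bilinear_simps)
lemma bc_add_left: "(a + b) o\<^sub>L c = (a o\<^sub>L c) + (b o\<^sub>L c)"
  by (rule blinfun_eqI) (simp add: blinfun.bilinear_simps)
lemma bc_add_right: "c o\<^sub>L (a + b) = (c o\<^sub>L a) + (c o\<^sub>L b)"
  by (rule blinfun_eqI) (simp add: blinfun.bilinear_simps)
lemma bc_scale_left: "(r *\<^sub>R a) o\<^sub>L c = r *\<^sub>R (a o\<^sub>L c)"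
  by (rule blinfun_eqI) (simp add: blinfun.bilinear_simps)
lemma bc_scale_right: "c o\<^sub>L (r *\<^sub>R a) = r *\<^sub>R (c o\<^sub>L a)"
  by (rule blinfun_eqI) (simp add: blinfun.bilinear_simps)

primrec opow :: "('v::real_normed_vector \<Rightarrow>\<^sub>L 'v) \<Rightarrow> nat \<Rightarrow> ('v \<Rightarrow>\<^sub>L 'v)" where
  "opow E 0 = id_blinfun"
| "opow E (Suc n) = E o\<^sub>L opow E n"

lemma opow_comm: "opow E n o\<^sub>L E = E o\<^sub>L opow E n"
  by (induction n) (simp_all add: bc_assoc)

lemma norm_opow: "norm (opow E n) \<le> norm E ^ n"
proof (induction n)
  case 0 thus ?case using norm_blinfun_id_le by simp
next
  case (Suc n)
  have "norm (opow E (Suc n)) \<le> norm E * norm (opow E n)" by (simp add: norm_blinfun_compose)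
  also have "\<dots> \<le> norm E * norm E ^ n" using Suc by (intro mult_left_mono) auto
  finally show ?case by simp
qed

lemma inverse_unique:
  assumes "S o\<^sub>L M = id_blinfun" "M o\<^sub>L S' = id_blinfun" shows "S = S'"
proof -
  have "S = S o\<^sub>L (M o\<^sub>L S')" using assms by simp
  also have "\<dots> = (S o\<^sub>L M) o\<^sub>L S'" by (simp add: bc_assoc)
  finally show ?thesis using assms by simp
qed

lemma neumann:
  fixes E :: "'v::banach \<Rightarrow>\<^sub>L 'v"
  assumes nE: "norm E < 1"
  defines "N \<equiv> suminf (opow E)"
  shows "summable (opow E)" "N o\<^sub>L (id_blinfun - E) = id_blinfun" "(id_blinfun - E) o\<^sub>L N = id_blinfun"
    "norm N \<le> 1 / (1 - norm E)" "N - id_blinfun = (E o\<^sub>L N)"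
proof -
  have sg: "summable (\<lambda>n. norm E ^ n)" using nE by (simp add: summable_geometric)
  have sn: "summable (\<lambda>n. norm (opow E n))"
    by (rule summable_comparison_test[OF _ sg]) (auto intro!: exI[of _ 0] norm_opow)
  show su: "summable (opow E)" using sn by (rule summable_norm_cancel)
  have lim0: "opow E \<longlonglongrightarrow> 0"
  proof -
    have "(\<lambda>n. norm E ^ n) \<longlonglongrightarrow> 0" using nE by (intro LIMSEQ_power_zero) auto
    thus ?thesis
      by (rule Lim_null_comparison[rotated]) (auto intro!: always_eventually norm_opow)
  qed
  have tel: "(\<lambda>n. opow E n - opow E (Suc n)) sums (opow E 0 - 0)"
    by (rule telescope_sums'[OF lim0])
  have bl1: "bounded_linear (\<lambda>X. (id_blinfun - E) o\<^sub>L X)"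
    by (rule bounded_bilinear.bounded_linear_right[OF bounded_bilinear_blinfun_compose])
  have bl2: "bounded_linear (\<lambda>X. X o\<^sub>L (id_blinfun - E))"
    by (rule bounded_bilinear.bounded_linear_left[OF bounded_bilinear_blinfun_compose])
  have "(\<lambda>n. (id_blinfun - E) o\<^sub>L opow E n) sums ((id_blinfun - E) o\<^sub>L N)"
    unfolding N_def by (rule bounded_linear.sums[OF bl1 summable_sums[OF su]])
  moreover have "(\<lambda>n. (id_blinfun - E) o\<^sub>L opow E n) = (\<lambda>n. opow E n - opow E (Suc n))"
    by (simp add: bc_diff_left)
  ultimately show r: "(id_blinfun - E) o\<^sub>L N = id_blinfun" using tel sums_unique2 by fastforce
  have "(\<lambda>n. opow E n o\<^sub>L (id_blinfun - E)) sums (N o\<^sub>L (id_blinfun - E))"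
    unfolding N_def by (rule bounded_linear.sums[OF bl2 summable_sums[OF su]])
  moreover have "(\<lambda>n. opow E n o\<^sub>L (id_blinfun - E)) = (\<lambda>n. opow E n - opow E (Suc n))"
    by (simp add: bc_diff_right opow_comm)
  ultimately show "N o\<^sub>L (id_blinfun - E) = id_blinfun" using tel sums_unique2 by fastforce
  have "norm N \<le> (\<Sum>n. norm (opow E n))" unfolding N_def by (rule summable_norm[OF sn])
  also have "\<dots> \<le> (\<Sum>n. norm E ^ n)" by (rule suminf_le[OF norm_opow sn sg])
  also have "\<dots> = 1 / (1 - norm E)" using nE by (simp add: suminf_geometric)
  finally show "norm N \<le> 1 / (1 - norm E)" .
  show "N - id_blinfun = (E o\<^sub>L N)" using r by (simp add: bc_diff_left algebra_simps)
qed

definition is_inv :: "('v::real_normed_vector \<Rightarrow>\<^sub>L 'v) \<Rightarrow> ('v \<Rightarrow>\<^sub>L 'v) \<Rightarrow> bool" where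
  "is_inv M S \<longleftrightarrow> S o\<^sub>L M = id_blinfun \<and> M o\<^sub>L S = id_blinfun"

lemma perturb:
  fixes M S D :: "'v::banach \<Rightarrow>\<^sub>L 'v"
  assumes inv: "is_inv M S" and small: "norm S * norm D < 1"
  defines "N \<equiv> suminf (opow (S o\<^sub>L D))"
  shows "is_inv (M - D) (N o\<^sub>L S)"
    "norm ((N o\<^sub>L S) - S) \<le> norm S ^ 2 * norm D / (1 - norm S * norm D)"
    "N o\<^sub>L S = suminf (\<lambda>n. opow (S o\<^sub>L D) n o\<^sub>L S)"
    "summable (\<lambda>n. opow (S o\<^sub>L D) n o\<^sub>L S)"
proof -
  let ?E = "S o\<^sub>L D"
  have nE: "norm ?E \<le> norm S * norm D" by (rule norm_blinfun_compose)
  hence nE1: "norm ?E < 1" using small by simp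
  note nm = neumann[OF nE1, folded N_def]
  have SM: "S o\<^sub>L M = id_blinfun" and MS: "M o\<^sub>L S = id_blinfun" using inv by (auto simp: is_inv_def)
  have fac: "M - D = M o\<^sub>L (id_blinfun - ?E)"
  proof -
    have "M o\<^sub>L (id_blinfun - ?E) = M - (M o\<^sub>L (S o\<^sub>L D))" by (simp add: bc_diff_right)
    also have "M o\<^sub>L (S o\<^sub>L D) = D" by (simp add: MS flip: bc_assoc)
    finally show ?thesis by simp
  qed
  have "(N o\<^sub>L S) o\<^sub>L (M - D) = N o\<^sub>L ((S o\<^sub>L M) o\<^sub>L (id_blinfun - ?E))"
    unfolding fac by (simp only: bc_assoc)
  also have "\<dots> = id_blinfun" using nm(2) SM by simp
  finally have 1: "(N o\<^sub>L S) o\<^sub>L (M - D) = id_blinfun" .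
  have "(M - D) o\<^sub>L (N o\<^sub>L S) = M o\<^sub>L (((id_blinfun - ?E) o\<^sub>L N) o\<^sub>L S)"
    unfolding fac by (simp only: bc_assoc)
  also have "\<dots> = id_blinfun" using nm(3) MS by simp
  finally show "is_inv (M - D) (N o\<^sub>L S)" using 1 by (simp add: is_inv_def)
  have "(N o\<^sub>L S) - S = (N - id_blinfun) o\<^sub>L S" by (simp add: bc_diff_left)
  also have "\<dots> = ?E o\<^sub>L (N o\<^sub>L S)" using nm(5) by (simp only: bc_assoc)
  finally have eq: "(N o\<^sub>L S) - S = ?E o\<^sub>L (N o\<^sub>L S)" .
  have e2: "norm (N o\<^sub>L S) \<le> norm N * norm S" by (rule norm_blinfun_compose)
  have "norm ((N o\<^sub>L S) - S) \<le> norm ?E * norm (N o\<^sub>L S)" unfolding eq by (rule norm_blinfun_compose)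
  also have "\<dots> \<le> norm ?E * (norm N * norm S)" using e2 by (rule mult_left_mono) simp
  also have "\<dots> \<le> (norm S * norm D) * ((1 / (1 - norm S * norm D)) * norm S)"
  proof (rule mult_mono[OF nE])
    have "1 / (1 - norm ?E) \<le> 1 / (1 - norm S * norm D)"
      using nE small nE1 by (intro divide_left_mono) auto
    hence "norm N \<le> 1 / (1 - norm S * norm D)" using nm(4) by linarith
    thus "norm N * norm S \<le> 1 / (1 - norm S * norm D) * norm S" by (rule mult_right_mono) simp
    show "0 \<le> norm S * norm D" by simp
    show "0 \<le> norm N * norm S" by simp
  qed
  also have "\<dots> = norm S ^ 2 * norm D / (1 - norm S * norm D)" by (simp add: power2_eq_square)
  finally show "norm ((N o\<^sub>L S) - S) \<le> norm S ^ 2 * norm D / (1 - norm S * norm D)" .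
  have bl: "bounded_linear (\<lambda>X. X o\<^sub>L S)"
    by (rule bounded_bilinear.bounded_linear_left[OF bounded_bilinear_blinfun_compose])
  have "(\<lambda>n. opow ?E n o\<^sub>L S) sums (N o\<^sub>L S)"
    unfolding N_def by (rule bounded_linear.sums[OF bl summable_sums[OF nm(1)]])
  thus "N o\<^sub>L S = suminf (\<lambda>n. opow ?E n o\<^sub>L S)" "summable (\<lambda>n. opow ?E n o\<^sub>L S)"
    by (auto simp: sums_iff)
qed

lemma suminf_preserves:
  fixes f :: "nat \<Rightarrow> ('v::banach \<Rightarrow>\<^sub>L 'w::banach)"
  assumes su: "summable f" and P: "closed P" "0 \<in> P" "\<And>x y. x \<in> P \<Longrightarrow> y \<in> P \<Longrightarrow> x + y \<in> P"
    and fP: "\<And>n. blinfun_apply (f n) v \<in> P"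
  shows "blinfun_apply (suminf f) v \<in> P"
proof -
  have ps: "(\<lambda>n. \<Sum>i<n. f i) \<longlonglongrightarrow> suminf f" using su by (rule summable_LIMSEQ)
  have "(\<lambda>n. blinfun_apply (\<Sum>i<n. f i) v) \<longlonglongrightarrow> blinfun_apply (suminf f) v"
    by (rule blinfun.tendsto[OF ps tendsto_const])
  moreover have "blinfun_apply (\<Sum>i<n. f i) v \<in> P" for n
  proof (induction n)
    case 0 thus ?case using P by simp
  next
    case (Suc n) thus ?case using P fP by (simp add: blinfun.add_left)
  qed
  ultimately show ?thesis by (rule closed_sequentially[OF P(1), of "\<lambda>n. blinfun_apply (\<Sum>i<n. f i) v", rotated])
qed


definition CB :: "('a::banach \<Rightarrow>\<^sub>L 'a) \<Rightarrow> ('a \<times> 'a) \<Rightarrow>\<^sub>L ('a \<times> 'a)" where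
  "CB B = Blinfun (\<lambda>p. (blinfun_apply B (fst p), blinfun_apply B (snd p)))"

definition Jo :: "('a::banach \<times> 'a) \<Rightarrow>\<^sub>L ('a \<times> 'a)" where
  "Jo = Blinfun (\<lambda>p. (- snd p, fst p))"

definition csc :: "complex \<Rightarrow> ('a::banach \<times> 'a) \<Rightarrow>\<^sub>L ('a \<times> 'a)" where
  "csc z = Re z *\<^sub>R id_blinfun + Im z *\<^sub>R Jo"

definition Mop :: "('a::banach \<Rightarrow>\<^sub>L 'a) \<Rightarrow> complex \<Rightarrow> ('a \<times> 'a) \<Rightarrow>\<^sub>L ('a \<times> 'a)" where
  "Mop B z = csc z - CB B"

lemma bl_CB: "bounded_linear (\<lambda>p. (blinfun_apply (B::'a::banach \<Rightarrow>\<^sub>L 'a) (fst p), blinfun_apply B (snd p)))"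
  by (intro bounded_linear_Pair bounded_linear_compose[OF blinfun.bounded_linear_right]
      bounded_linear_fst bounded_linear_snd)

lemma CB_apply[simp]: "blinfun_apply (CB B) p = (blinfun_apply B (fst p), blinfun_apply B (snd p))"
  unfolding CB_def bounded_linear_Blinfun_apply[OF bl_CB] by simp

lemma bl_Jo: "bounded_linear (\<lambda>p::('a::banach \<times> 'a). (- snd p, fst p))"
  by (intro bounded_linear_Pair bounded_linear_minus bounded_linear_fst bounded_linear_snd)

lemma Jo_apply[simp]: "blinfun_apply Jo p = (- snd p, fst p)"
  unfolding Jo_def bounded_linear_Blinfun_apply[OF bl_Jo] by simp

lemma csc_apply[simp]: "blinfun_apply (csc z) p =
   (Re z *\<^sub>R fst p - Im z *\<^sub>R snd p, Im z *\<^sub>R fst p + Re z *\<^sub>R snd p)"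
  unfolding csc_def by (cases p) (simp add: blinfun.add_left blinfun.scaleR_left algebra_simps)

lemma Mop_apply: "blinfun_apply (Mop B z) = cshift B z"
  unfolding Mop_def cshift_def by (auto simp: blinfun.diff_left fun_eq_iff)

lemma csc_mult: "csc a o\<^sub>L csc b = (csc (a * b) :: ('a::banach \<times> 'a) \<Rightarrow>\<^sub>L _)"
  by (rule blinfun_eqI) (simp add: algebra_simps scaleR_diff_right scaleR_add_right)

lemma csc_add: "csc (a + b) = (csc a + csc b :: ('a::banach \<times> 'a) \<Rightarrow>\<^sub>L _)"
  by (rule blinfun_eqI) (simp add: blinfun.add_left algebra_simps scaleR_add_left)

lemma csc_diff: "csc (a - b) = (csc a - csc b :: ('a::banach \<times> 'a) \<Rightarrow>\<^sub>L _)"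
  by (rule blinfun_eqI) (simp add: blinfun.diff_left algebra_simps scaleR_diff_left)

lemma csc_real: "csc (complex_of_real r) = (r *\<^sub>R id_blinfun :: ('a::banach \<times> 'a) \<Rightarrow>\<^sub>L _)"
  by (rule blinfun_eqI) (simp add: blinfun.scaleR_left prod_eq_iff)

lemma csc_one[simp]: "csc 1 = (id_blinfun :: ('a::banach \<times> 'a) \<Rightarrow>\<^sub>L _)"
  using csc_real[of 1] by simp

lemma csc_zero[simp]: "csc 0 = (0 :: ('a::banach \<times> 'a) \<Rightarrow>\<^sub>L _)"
  using csc_real[of 0] by simp

lemma csc_comm: "csc a o\<^sub>L csc b = (csc b o\<^sub>L csc a :: ('a::banach \<times> 'a) \<Rightarrow>\<^sub>L _)"
  by (simp add: csc_mult mult.commute)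

lemma csc_CB_comm: "csc a o\<^sub>L CB B = CB B o\<^sub>L csc a"
  by (rule blinfun_eqI) (simp add: blinfun.bilinear_simps)

lemma Mop_csc_comm: "csc a o\<^sub>L Mop B z = Mop B z o\<^sub>L csc a"
  unfolding Mop_def by (simp add: bc_diff_left bc_diff_right csc_CB_comm csc_comm)

lemma norm_Jo_apply: "norm (blinfun_apply Jo p) = norm p"
  by (cases p) (simp add: norm_Pair add.commute)

lemma norm_csc: "norm (csc z :: ('a::banach \<times> 'a) \<Rightarrow>\<^sub>L _) \<le> 2 * cmod z"
proof (rule norm_blinfun_bound)
  show "0 \<le> 2 * cmod z" by simp
  fix p :: "'a \<times> 'a"
  have "blinfun_apply (csc z) p = Re z *\<^sub>R p + Im z *\<^sub>R blinfun_apply Jo p"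
    by (cases p) (simp add: algebra_simps)
  also have "norm \<dots> \<le> \<bar>Re z\<bar> * norm p + \<bar>Im z\<bar> * norm p"
  proof -
    have "norm (Im z *\<^sub>R blinfun_apply Jo p) = \<bar>Im z\<bar> * norm p" by (simp only: norm_scaleR norm_Jo_apply)
    moreover have "norm (Re z *\<^sub>R p) = \<bar>Re z\<bar> * norm p" by simp
    ultimately show ?thesis using norm_triangle_ineq[of "Re z *\<^sub>R p" "Im z *\<^sub>R blinfun_apply Jo p"] by linarith
  qed
  also have "\<dots> \<le> cmod z * norm p + cmod z * norm p"
    by (intro add_mono mult_right_mono abs_Re_le_cmod abs_Im_le_cmod) auto
  finally show "norm (blinfun_apply (csc z) p) \<le> 2 * cmod z * norm p" by simp
qed

lemma in_res_iff: "in_resolvent_set B z \<longleftrightarrow> (\<exists>S. is_inv (Mop B z) S)"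
proof -
  have "(\<forall>p. blinfun_apply S (cshift B z p) = p) \<longleftrightarrow> S o\<^sub>L Mop B z = id_blinfun" for S
    by (auto simp: Mop_apply intro!: blinfun_eqI) (metis blinfun_apply_blinfun_compose blinfun_apply_id_blinfun id_apply Mop_apply)
  moreover have "(\<forall>p. cshift B z (blinfun_apply S p) = p) \<longleftrightarrow> Mop B z o\<^sub>L S = id_blinfun" for S
    by (auto simp: Mop_apply intro!: blinfun_eqI) (metis blinfun_apply_blinfun_compose blinfun_apply_id_blinfun id_apply Mop_apply)
  ultimately show ?thesis unfolding in_resolvent_set_def is_inv_def by simp
qed

lemma resolvent_inv: "in_resolvent_set B z \<Longrightarrow> is_inv (Mop B z) (resolvent B z)"
proof -
  assume "in_resolvent_set B z"
  hence ex: "\<exists>S. (\<forall>p. blinfun_apply S (cshift B z p) = p) \<and> (\<forall>p. cshift B z (blinfun_apply S p) = p)"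
    unfolding in_resolvent_set_def .
  have "(\<forall>p. blinfun_apply (resolvent B z) (cshift B z p) = p) \<and> (\<forall>p. cshift B z (blinfun_apply (resolvent B z) p) = p)"
    unfolding resolvent_def by (rule someI_ex[OF ex])
  thus ?thesis by (auto simp: is_inv_def Mop_apply intro!: blinfun_eqI)
qed

lemma is_inv_unique: "is_inv M S \<Longrightarrow> is_inv M S' \<Longrightarrow> S = S'"
  unfolding is_inv_def using inverse_unique by blast

lemma resolvent_eq: "is_inv (Mop B z) S \<Longrightarrow> resolvent B z = S"
  using resolvent_inv in_res_iff is_inv_unique by blast

lemma res_comm_csc:
  assumes "in_resolvent_set B z"
  shows "resolvent B z o\<^sub>L csc a = csc a o\<^sub>L resolvent B z"
proof -
  let ?R = "resolvent B z" and ?M = "Mop B z"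
  have i: "?R o\<^sub>L ?M = id_blinfun" "?M o\<^sub>L ?R = id_blinfun" using resolvent_inv[OF assms] by (auto simp: is_inv_def)
  have "?R o\<^sub>L csc a = ?R o\<^sub>L (csc a o\<^sub>L (?M o\<^sub>L ?R))" using i by simp
  also have "\<dots> = ?R o\<^sub>L ((?M o\<^sub>L csc a) o\<^sub>L ?R)" by (simp only: Mop_csc_comm flip: bc_assoc)
  also have "\<dots> = (?R o\<^sub>L ?M) o\<^sub>L (csc a o\<^sub>L ?R)" by (simp only: bc_assoc)
  finally show ?thesis using i by simp
qed

lemma Mop_shift: "Mop B z = Mop B z0 - csc (z0 - z)"
  unfolding Mop_def csc_diff by simp

lemma res_local:
  assumes r: "in_resolvent_set B z0" and small: "2 * cmod (z - z0) * norm (resolvent B z0) < 1"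
  shows "in_resolvent_set B z"
    "norm (resolvent B z - resolvent B z0) \<le> norm (resolvent B z0) ^ 2 * (2 * cmod (z - z0)) / (1 - norm (resolvent B z0) * (2 * cmod (z - z0)))"
    "resolvent B z = suminf (\<lambda>n. opow (resolvent B z0 o\<^sub>L csc (z0 - z)) n o\<^sub>L resolvent B z0)"
    "summable (\<lambda>n. opow (resolvent B z0 o\<^sub>L csc (z0 - z)) n o\<^sub>L resolvent B z0)"
proof -
  let ?S = "resolvent B z0" and ?D = "csc (z0 - z) :: ('a \<times> 'a) \<Rightarrow>\<^sub>L _"
  have nD: "norm ?D \<le> 2 * cmod (z - z0)" using norm_csc[of "z0 - z"] by (simp add: norm_minus_commute)
  have sm: "norm ?S * norm ?D < 1"
  proof -
    have "norm ?S * norm ?D \<le> norm ?S * (2 * cmod (z - z0))" using nD by (intro mult_left_mono) auto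
    thus ?thesis using small by (simp add: mult.commute mult.left_commute)
  qed
  note P = perturb[OF resolvent_inv[OF r] sm]
  have inv: "is_inv (Mop B z) (suminf (opow (?S o\<^sub>L ?D)) o\<^sub>L ?S)" using P(1) Mop_shift[of B z z0] by simp
  thus "in_resolvent_set B z" using in_res_iff by blast
  have eq: "resolvent B z = suminf (opow (?S o\<^sub>L ?D)) o\<^sub>L ?S" by (rule resolvent_eq[OF inv])
  show "resolvent B z = suminf (\<lambda>n. opow (?S o\<^sub>L ?D) n o\<^sub>L ?S)" using eq P(3) by simp
  show "summable (\<lambda>n. opow (?S o\<^sub>L ?D) n o\<^sub>L ?S)" using P(4) .
  have "norm (resolvent B z - ?S) \<le> norm ?S ^ 2 * norm ?D / (1 - norm ?S * norm ?D)" using P(2) eq by simp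
  also have "\<dots> \<le> norm ?S ^ 2 * (2 * cmod (z - z0)) / (1 - norm ?S * (2 * cmod (z - z0)))"
  proof (rule frac_le)
    show "0 \<le> norm ?S ^ 2 * (2 * cmod (z - z0))" by simp
    show "norm ?S ^ 2 * norm ?D \<le> norm ?S ^ 2 * (2 * cmod (z - z0))" using nD by (intro mult_left_mono) auto
    show "0 < 1 - norm ?S * (2 * cmod (z - z0))" using small by (simp add: mult.commute mult.left_commute)
    show "1 - norm ?S * (2 * cmod (z - z0)) \<le> 1 - norm ?S * norm ?D" using nD by (simp add: mult_left_mono)
  qed
  finally show "norm (resolvent B z - ?S) \<le> norm ?S ^ 2 * (2 * cmod (z - z0)) / (1 - norm ?S * (2 * cmod (z - z0)))" .
qed

lemma spectrum_bound:
  assumes "z \<in> op_spectrum B" shows "cmod z \<le> 2 * norm (CB B)"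
proof (rule ccontr)
  assume "\<not> ?thesis"
  hence big: "cmod z > 2 * norm (CB B)" by simp
  hence z0: "z \<noteq> 0" by (auto intro: order.strict_trans1[OF _ big])
  have inv: "is_inv (csc z) (csc (1/z) :: ('a \<times> 'a) \<Rightarrow>\<^sub>L _)"
    unfolding is_inv_def using z0 by (simp add: csc_mult)
  have "norm (csc (1/z) :: ('a \<times> 'a) \<Rightarrow>\<^sub>L _) * norm (CB B) \<le> (2 * cmod (1/z)) * norm (CB B)"
    by (intro mult_right_mono norm_csc) auto
  also have "\<dots> < 1" using big z0 by (simp add: norm_divide field_simps)
  finally have "norm (csc (1/z) :: ('a \<times> 'a) \<Rightarrow>\<^sub>L _) * norm (CB B) < 1" .
  from perturb(1)[OF inv this] have "\<exists>S. is_inv (Mop B z) S" unfolding Mop_def by blast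
  thus False using assms in_res_iff unfolding op_spectrum_def by blast
qed

lemma spectrum_bdd: "bdd_above (cmod ` op_spectrum B)"
  using spectrum_bound unfolding bdd_above_def by blast

lemma above_radius_res:
  assumes "cmod z > op_spectral_radius B" shows "in_resolvent_set B z"
proof (rule ccontr)
  assume "\<not> in_resolvent_set B z"
  hence "z \<in> op_spectrum B" unfolding op_spectrum_def by simp
  hence "cmod z \<le> op_spectral_radius B" unfolding op_spectral_radius_def
    by (intro cSup_upper spectrum_bdd) auto
  thus False using assms by simp
qed

lemma res_identity:
  assumes "in_resolvent_set B z" "in_resolvent_set B w"
  shows "resolvent B z - resolvent B w = resolvent B z o\<^sub>L csc (w - z) o\<^sub>L resolvent B w"
proof -
  let ?Rz = "resolvent B z" and ?Rw = "resolvent B w"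
  have iz: "?Rz o\<^sub>L Mop B z = id_blinfun" "Mop B z o\<^sub>L ?Rz = id_blinfun"
    using resolvent_inv[OF assms(1)] by (auto simp: is_inv_def)
  have iw: "?Rw o\<^sub>L Mop B w = id_blinfun" "Mop B w o\<^sub>L ?Rw = id_blinfun"
    using resolvent_inv[OF assms(2)] by (auto simp: is_inv_def)
  have "csc (w - z) = Mop B w - Mop B z" unfolding Mop_def csc_diff by simp
  hence "?Rz o\<^sub>L csc (w - z) o\<^sub>L ?Rw = (?Rz o\<^sub>L (Mop B w o\<^sub>L ?Rw)) - ((?Rz o\<^sub>L Mop B z) o\<^sub>L ?Rw)"
    by (simp add: bc_diff_left bc_diff_right bc_assoc)
  thus ?thesis using iz iw by simp
qed


lemma Jo_Jo: "blinfun_apply Jo (blinfun_apply Jo v) = - v" by (cases v) simp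

lemma csc_eq: "blinfun_apply (csc c) v = Re c *\<^sub>R v + Im c *\<^sub>R blinfun_apply Jo v"
  by (cases v) (simp add: algebra_simps)

declare csc_apply[simp del] Jo_apply[simp del]

definition Phi :: "(('a::banach \<times> 'a) \<Rightarrow>\<^sub>L real) \<Rightarrow> ('a \<times> 'a) \<Rightarrow> complex" where
  "Phi \<phi> v = Complex (blinfun_apply \<phi> v) (- blinfun_apply \<phi> (blinfun_apply Jo v))"

lemma Phi_csc: "Phi \<phi> (blinfun_apply (csc c) v) = c * Phi \<phi> v"
  unfolding Phi_def csc_eq by (simp add: blinfun.bilinear_simps Jo_Jo complex_eq_iff algebra_simps)

lemma Phi_diff: "Phi \<phi> (u - v) = Phi \<phi> u - Phi \<phi> v"
  unfolding Phi_def by (simp add: blinfun.bilinear_simps complex_eq_iff)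

lemma Re_Phi: "Re (Phi \<phi> v) = blinfun_apply \<phi> v" unfolding Phi_def by simp

lemma norm_Phi: "cmod (Phi \<phi> v) \<le> 2 * norm \<phi> * norm v"
proof -
  have "cmod (Phi \<phi> v) \<le> \<bar>blinfun_apply \<phi> v\<bar> + \<bar>blinfun_apply \<phi> (blinfun_apply Jo v)\<bar>"
    unfolding Phi_def using cmod_le[of "Complex (blinfun_apply \<phi> v) (- blinfun_apply \<phi> (blinfun_apply Jo v))"] by simp
  also have "\<dots> \<le> norm \<phi> * norm v + norm \<phi> * norm v"
  proof -
    have 1: "\<bar>blinfun_apply \<phi> v\<bar> \<le> norm \<phi> * norm v" using norm_blinfun[of \<phi> v] by simp
    have 2: "\<bar>blinfun_apply \<phi> (blinfun_apply Jo v)\<bar> \<le> norm \<phi> * norm v"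
      using norm_blinfun[of \<phi> "blinfun_apply Jo v"] by (simp add: norm_Jo_apply)
    from 1 2 show ?thesis by linarith
  qed
  finally show ?thesis by (simp add: algebra_simps)
qed

lemma tendsto_by_bound:
  fixes f :: "complex \<Rightarrow> 'b::real_normed_vector"
  assumes "eventually (\<lambda>z. norm (f z - l) \<le> K * cmod (z - w)) (at w)"
  shows "(f \<longlongrightarrow> l) (at w)"
proof (rule LIM_zero_cancel, rule Lim_null_comparison[OF assms])
  show "((\<lambda>z. K * cmod (z - w)) \<longlongrightarrow> 0) (at w)"
    by (rule tendsto_eq_intros refl | simp)+
qed

lemma res_local_bound:
  assumes r: "in_resolvent_set B w" and z: "cmod (z - w) < 1 / (4 * (norm (resolvent B w) + 1))"
  shows "in_resolvent_set B z" "norm (resolvent B z - resolvent B w) \<le> 4 * norm (resolvent B w) ^ 2 * cmod (z - w)"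
proof -
  let ?s = "norm (resolvent B w)"
  have s0: "?s \<ge> 0" by simp
  have a: "cmod (z - w) * (4 * (?s + 1)) < 1" using z s0 by (simp add: pos_less_divide_eq add_nonneg_pos)
  hence "4 * (cmod (z - w) * ?s) + 4 * cmod (z - w) < 1" by (simp add: algebra_simps)
  hence "2 * (cmod (z - w) * ?s) \<le> 1/2" using norm_ge_zero[of "z - w"] by linarith
  hence h: "2 * cmod (z - w) * ?s \<le> 1/2" by (simp add: mult.assoc)
  hence sm: "2 * cmod (z - w) * ?s < 1" by simp
  note L = res_local[OF r sm]
  show "in_resolvent_set B z" by (rule L(1))
  have "norm (resolvent B z - resolvent B w) \<le> ?s ^ 2 * (2 * cmod (z - w)) / (1 - ?s * (2 * cmod (z - w)))" by (rule L(2))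
  also have "\<dots> \<le> ?s ^ 2 * (2 * cmod (z - w)) / (1/2)"
    using h by (intro divide_left_mono) (auto simp: mult.commute mult.left_commute)
  finally show "norm (resolvent B z - resolvent B w) \<le> 4 * ?s ^ 2 * cmod (z - w)" by simp
qed

lemma res_deriv:
  assumes r: "in_resolvent_set B w"
  shows "((\<lambda>z. Phi \<phi> (blinfun_apply (resolvent B z) p)) has_field_derivative
          (- Phi \<phi> (blinfun_apply (resolvent B w) (blinfun_apply (resolvent B w) p)))) (at w)"
proof -
  let ?R = "resolvent B" and ?s = "norm (resolvent B w)"
  define q where "q = blinfun_apply (?R w) p"
  define \<delta> where "\<delta> = 1 / (4 * (?s + 1))"
  have dp: "\<delta> > 0" unfolding \<delta>_def by (simp add: add_nonneg_pos)
  have near: "in_resolvent_set B z \<and> norm (?R z - ?R w) \<le> 4 * ?s ^ 2 * cmod (z - w)" if "cmod (z - w) < \<delta>" for z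
    using res_local_bound[OF r, of z] that \<delta>_def by auto
  have quot: "(Phi \<phi> (blinfun_apply (?R z) p) - Phi \<phi> (blinfun_apply (?R w) p)) / (z - w)
        = - Phi \<phi> (blinfun_apply (?R z) q)" if rz: "in_resolvent_set B z" and zw: "z \<noteq> w" for z
  proof -
    have "Phi \<phi> (blinfun_apply (?R z) p) - Phi \<phi> (blinfun_apply (?R w) p) = Phi \<phi> (blinfun_apply (?R z - ?R w) p)"
      by (simp add: Phi_diff blinfun.diff_left)
    also have "?R z - ?R w = ?R z o\<^sub>L csc (w - z) o\<^sub>L ?R w" by (rule res_identity[OF rz r])
    also have "\<dots> = csc (w - z) o\<^sub>L ?R z o\<^sub>L ?R w" by (simp add: res_comm_csc[OF rz])
    also have "Phi \<phi> (blinfun_apply (csc (w - z) o\<^sub>L ?R z o\<^sub>L ?R w) p) = (w - z) * Phi \<phi> (blinfun_apply (?R z) q)"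
      by (simp only: blinfun_apply_blinfun_compose Phi_csc q_def)
    finally show ?thesis using zw by (simp add: field_simps)
  qed
  have lim: "((\<lambda>z. - Phi \<phi> (blinfun_apply (?R z) q)) \<longlongrightarrow> - Phi \<phi> (blinfun_apply (?R w) q)) (at w)"
  proof (rule tendsto_by_bound)
    show "\<forall>\<^sub>F z in at w. norm (- Phi \<phi> (blinfun_apply (?R z) q) - - Phi \<phi> (blinfun_apply (?R w) q))
          \<le> (2 * norm \<phi> * (4 * ?s ^ 2) * norm q) * cmod (z - w)"
      unfolding eventually_at
    proof (intro exI[of _ \<delta>] conjI dp ballI impI)
      fix z assume "z \<in> UNIV" "z \<noteq> w \<and> dist z w < \<delta>"
      hence n: "norm (?R z - ?R w) \<le> 4 * ?s ^ 2 * cmod (z - w)" using near by (simp add: dist_norm)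
      have "norm (- Phi \<phi> (blinfun_apply (?R z) q) - - Phi \<phi> (blinfun_apply (?R w) q))
            = cmod (Phi \<phi> (blinfun_apply (?R z - ?R w) q))"
        by (simp add: Phi_diff blinfun.diff_left norm_minus_commute)
      also have "\<dots> \<le> 2 * norm \<phi> * norm (blinfun_apply (?R z - ?R w) q)" by (rule norm_Phi)
      also have "\<dots> \<le> 2 * norm \<phi> * (norm (?R z - ?R w) * norm q)"
        by (intro mult_left_mono norm_blinfun) auto
      also have "\<dots> \<le> 2 * norm \<phi> * ((4 * ?s ^ 2 * cmod (z - w)) * norm q)"
        by (intro mult_left_mono mult_right_mono n) auto
      finally show "norm (- Phi \<phi> (blinfun_apply (?R z) q) - - Phi \<phi> (blinfun_apply (?R w) q))
          \<le> (2 * norm \<phi> * (4 * ?s ^ 2) * norm q) * cmod (z - w)" by (simp add: algebra_simps)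
    qed
  qed
  have ev: "\<forall>\<^sub>F z in at w. - Phi \<phi> (blinfun_apply (?R z) q) =
        (Phi \<phi> (blinfun_apply (?R z) p) - Phi \<phi> (blinfun_apply (?R w) p)) / (z - w)"
    unfolding eventually_at
    by (intro exI[of _ \<delta>] conjI dp ballI impI) (use near quot in \<open>auto simp: dist_norm\<close>)
  show ?thesis unfolding has_field_derivative_iff
    using Lim_transform_eventually[OF lim ev] by (simp add: q_def)
qed

lemma res_holo:
  assumes "open S" "\<forall>z\<in>S. in_resolvent_set B z"
  shows "(\<lambda>z. Phi \<phi> (blinfun_apply (resolvent B z) p)) holomorphic_on S"
  unfolding holomorphic_on_open[OF assms(1)] using assms(2) res_deriv by blast


definition gk :: "('a::banach \<Rightarrow>\<^sub>L 'a) \<Rightarrow> complex \<Rightarrow> nat \<Rightarrow> complex \<Rightarrow> ('a \<times> 'a) \<Rightarrow>\<^sub>L ('a \<times> 'a)" where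
  "gk B l j z = csc ((z - l) ^ j) o\<^sub>L resolvent B z"

lemma gk_Phi: "Phi \<phi> (blinfun_apply (gk B l j z) p) = (z - l) ^ j * Phi \<phi> (blinfun_apply (resolvent B z) p)"
  unfolding gk_def by (simp only: blinfun_apply_blinfun_compose Phi_csc)

lemma lip_vec:
  fixes B :: "'a::banach \<Rightarrow>\<^sub>L 'a"
  assumes ep: "\<epsilon> > 0" and res: "\<forall>z\<in>ball l \<epsilon> - {l}. in_resolvent_set B z"
    and bnd: "\<forall>z\<in>ball l \<epsilon> - {l}. norm (gk B l j z) \<le> C"
    and z1: "z1 \<in> ball l (\<epsilon>/3) - {l}" and z2: "z2 \<in> ball l (\<epsilon>/3) - {l}"
  shows "norm (blinfun_apply (gk B l j z1 - gk B l j z2) u) \<le> (4 * C / \<epsilon>) * cmod (z1 - z2) * norm u"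
proof -
  let ?v = "blinfun_apply (gk B l j z1 - gk B l j z2) u"
  obtain \<phi> where n\<phi>: "norm \<phi> \<le> 1" and \<phi>v: "blinfun_apply \<phi> ?v = norm ?v" using hb_norming by blast
  define h where "h z = (z - l) ^ j * Phi \<phi> (blinfun_apply (resolvent B z) u)" for z
  define S0 where "S0 = ball l \<epsilon> - {l}"
  have oS0: "open S0" unfolding S0_def by auto
  have holo: "h holomorphic_on S0" unfolding h_def
    by (intro holomorphic_intros res_holo oS0) (use res S0_def in auto)
  have hb: "norm (h z) \<le> 2 * C * norm u" if "z \<in> S0" for z
  proof -
    have "h z = Phi \<phi> (blinfun_apply (gk B l j z) u)" unfolding h_def gk_Phi ..
    hence "norm (h z) \<le> 2 * norm \<phi> * norm (blinfun_apply (gk B l j z) u)" using norm_Phi by simp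
    also have "\<dots> \<le> 2 * 1 * (norm (gk B l j z) * norm u)"
      by (intro mult_mono n\<phi> norm_blinfun) auto
    also have "\<dots> \<le> 2 * 1 * (C * norm u)"
      using bnd that S0_def by (intro mult_left_mono mult_right_mono) auto
    finally show ?thesis by simp
  qed
  have "\<exists>H. H holomorphic_on ball l \<epsilon> \<and> (\<forall>z\<in>ball l \<epsilon> - {l}. H z = h z)"
  proof (subst holomorphic_on_extend_bounded)
    show "h holomorphic_on ball l \<epsilon> - {l}" using holo S0_def by simp
    show "l \<in> interior (ball l \<epsilon>)" using ep by simp
    show "\<exists>B. \<forall>\<^sub>F z in at l. norm (h z) \<le> B"
      unfolding eventually_at
      by (intro exI[of _ "2 * C * norm u"] exI[of _ \<epsilon>] conjI ep ballI impI hb)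
         (auto simp: S0_def dist_commute)
  qed
  then obtain H where Hh: "H holomorphic_on ball l \<epsilon>" and HE: "\<And>z. z \<in> ball l \<epsilon> - {l} \<Longrightarrow> H z = h z" by blast
  have dH: "norm (deriv H w) \<le> 4 * C * norm u / \<epsilon>" if w: "w \<in> ball l (\<epsilon>/3)" for w
  proof -
    have sub: "cball w (\<epsilon>/2) \<subseteq> ball l \<epsilon>"
    proof
      fix x assume "x \<in> cball w (\<epsilon>/2)"
      hence "dist w x \<le> \<epsilon>/2" by simp
      moreover have "dist l w < \<epsilon>/3" using w by simp
      ultimately have "dist l x < \<epsilon>" using dist_triangle[of l x w] ep by linarith
      thus "x \<in> ball l \<epsilon>" by simp
    qed
    have "norm ((deriv ^^ 1) H w) \<le> fact 1 * (2 * C * norm u) / (\<epsilon>/2) ^ 1"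
    proof (rule Cauchy_inequality)
      show "H holomorphic_on ball w (\<epsilon>/2)" using Hh sub ball_subset_cball by (blast intro: holomorphic_on_subset)
      show "continuous_on (cball w (\<epsilon>/2)) H"
        using holomorphic_on_imp_continuous_on[OF Hh] sub by (rule continuous_on_subset)
      show "0 < \<epsilon>/2" using ep by simp
      fix x assume x: "norm (w - x) = \<epsilon>/2"
      have "x \<in> cball w (\<epsilon>/2)" using x by (simp add: dist_norm)
      hence xb: "x \<in> ball l \<epsilon>" using sub by blast
      have "x \<noteq> l"
      proof
        assume "x = l"
        hence "norm (w - l) = \<epsilon>/2" using x by simp
        moreover have "norm (w - l) < \<epsilon>/3" using w by (simp add: dist_norm norm_minus_commute)
        ultimately show False using ep by simp
      qed
      hence "x \<in> S0" using xb S0_def by simp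
      thus "norm (H x) \<le> 2 * C * norm u" using HE hb S0_def by simp
    qed
    thus ?thesis by (simp add: field_simps)
  qed
  have lipH: "norm (H z1 - H z2) \<le> (4 * C * norm u / \<epsilon>) * norm (z1 - z2)"
  proof (rule field_differentiable_bound[of "ball l (\<epsilon>/3)"])
    show "convex (ball l (\<epsilon>/3))" by simp
    fix z assume z: "z \<in> ball l (\<epsilon>/3)"
    hence "z \<in> ball l \<epsilon>" using ep by auto
    thus "(H has_field_derivative deriv H z) (at z within ball l (\<epsilon>/3))"
      by (rule holomorphic_derivI[OF Hh open_ball])
    show "norm (deriv H z) \<le> 4 * C * norm u / \<epsilon>" using dH z .
  qed (use z1 z2 in auto)
  have "H z1 - H z2 = Phi \<phi> ?v"
  proof -
    have "z1 \<in> ball l \<epsilon> - {l}" "z2 \<in> ball l \<epsilon> - {l}" using z1 z2 ep by auto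
    hence "H z1 - H z2 = h z1 - h z2" using HE by simp
    also have "\<dots> = Phi \<phi> (blinfun_apply (gk B l j z1) u) - Phi \<phi> (blinfun_apply (gk B l j z2) u)"
      unfolding h_def gk_Phi ..
    also have "\<dots> = Phi \<phi> ?v" by (simp add: Phi_diff blinfun.diff_left)
    finally show ?thesis .
  qed
  hence "norm ?v \<le> cmod (H z1 - H z2)" using \<phi>v Re_Phi[of \<phi> ?v] complex_Re_le_cmod[of "Phi \<phi> ?v"] by simp
  also have "\<dots> \<le> (4 * C * norm u / \<epsilon>) * norm (z1 - z2)" by (rule lipH)
  finally show ?thesis by (simp add: field_simps)
qed

lemma lip_op:
  fixes B :: "'a::banach \<Rightarrow>\<^sub>L 'a"
  assumes ep: "\<epsilon> > 0" and res: "\<forall>z\<in>ball l \<epsilon> - {l}. in_resolvent_set B z"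
    and bnd: "\<forall>z\<in>ball l \<epsilon> - {l}. norm (gk B l j z) \<le> C"
    and z1: "z1 \<in> ball l (\<epsilon>/3) - {l}" and z2: "z2 \<in> ball l (\<epsilon>/3) - {l}"
  shows "norm (gk B l j z1 - gk B l j z2) \<le> (4 * C / \<epsilon>) * cmod (z1 - z2)"
proof (rule norm_blinfun_bound)
  have "l + of_real (\<epsilon>/2) \<in> ball l \<epsilon> - {l}" using ep by (simp add: dist_norm)
  hence "C \<ge> 0" using bnd norm_ge_zero order_trans by blast
  thus "0 \<le> 4 * C / \<epsilon> * cmod (z1 - z2)" using ep by simp
  show "\<And>x. norm (blinfun_apply (gk B l j z1 - gk B l j z2) x) \<le> 4 * C / \<epsilon> * cmod (z1 - z2) * norm x"
    by (rule lip_vec[OF assms])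
qed

lemma pole_limit:
  fixes B :: "'a::banach \<Rightarrow>\<^sub>L 'a"
  assumes ep: "\<epsilon> > 0" and res: "\<forall>z\<in>ball l \<epsilon> - {l}. in_resolvent_set B z"
    and bnd: "\<forall>z\<in>ball l \<epsilon> - {l}. norm (gk B l j z) \<le> C"
  shows "\<exists>Q L. \<forall>z\<in>ball l (\<epsilon>/3) - {l}. norm (gk B l j z - Q) \<le> L * cmod (z - l)"
proof -
  define L where "L = 4 * C / \<epsilon>"
  have lip: "\<And>z1 z2. z1 \<in> ball l (\<epsilon>/3) - {l} \<Longrightarrow> z2 \<in> ball l (\<epsilon>/3) - {l} \<Longrightarrow>
      norm (gk B l j z1 - gk B l j z2) \<le> L * cmod (z1 - z2)"
    unfolding L_def by (rule lip_op[OF assms])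
  have "l + of_real (\<epsilon>/2) \<in> ball l \<epsilon> - {l}" using ep by (simp add: dist_norm)
  hence "C \<ge> 0" using bnd norm_ge_zero order_trans by blast
  hence L0: "L \<ge> 0" unfolding L_def using ep by simp
  define zs where "zs n = l + of_real ((\<epsilon>/6) / real (Suc n))" for n
  have zsin: "zs n \<in> ball l (\<epsilon>/3) - {l}" for n
  proof -
    define d where "d = (\<epsilon>/6) / real (Suc n)"
    have "d \<le> \<epsilon>/6" unfolding d_def using ep by (simp add: divide_le_eq)
    moreover have "d > 0" unfolding d_def using ep by simp
    moreover have "dist l (l + complex_of_real d) = \<bar>d\<bar>" by (simp add: dist_norm)
    ultimately show ?thesis unfolding zs_def d_def[symmetric] using ep by auto
  qed
  have "(\<lambda>n. (\<epsilon>/6) / real n) \<longlonglongrightarrow> 0" by (rule lim_const_over_n)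
  hence t0: "(\<lambda>n. (\<epsilon>/6) / real (Suc n)) \<longlonglongrightarrow> 0" by (rule LIMSEQ_Suc)
  have "(\<lambda>n. l + complex_of_real ((\<epsilon>/6) / real (Suc n))) \<longlonglongrightarrow> l + complex_of_real 0"
    by (intro tendsto_add tendsto_const tendsto_of_real t0)
  hence zl: "zs \<longlonglongrightarrow> l" unfolding zs_def by simp
  have "Cauchy (\<lambda>n. gk B l j (zs n))"
  proof (rule CauchyI)
    fix e :: real assume e: "e > 0"
    have "Cauchy zs" using zl by (rule LIMSEQ_imp_Cauchy)
    then obtain M where M: "\<forall>m\<ge>M. \<forall>n\<ge>M. norm (zs m - zs n) < e / (L + 1)"
      using CauchyD[of zs "e / (L+1)"] e L0 by auto
    show "\<exists>M. \<forall>m\<ge>M. \<forall>n\<ge>M. norm (gk B l j (zs m) - gk B l j (zs n)) < e"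
    proof (intro exI allI impI)
      fix m n assume "m \<ge> M" "n \<ge> M"
      hence c: "cmod (zs m - zs n) < e / (L + 1)" using M by blast
      have "norm (gk B l j (zs m) - gk B l j (zs n)) \<le> L * cmod (zs m - zs n)" using lip zsin by blast
      also have "\<dots> \<le> L * (e / (L + 1))" using c L0 by (intro mult_left_mono) auto
      also have "\<dots> < e" using e L0 by (simp add: field_simps)
      finally show "norm (gk B l j (zs m) - gk B l j (zs n)) < e" .
    qed
  qed
  then obtain Q where Q: "(\<lambda>n. gk B l j (zs n)) \<longlonglongrightarrow> Q"
    unfolding Cauchy_convergent_iff convergent_def by blast
  show ?thesis
  proof (intro exI ballI)
    fix z assume z: "z \<in> ball l (\<epsilon>/3) - {l}"
    have a: "(\<lambda>n. norm (gk B l j z - gk B l j (zs n))) \<longlonglongrightarrow> norm (gk B l j z - Q)"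
      by (intro tendsto_intros Q)
    have b: "(\<lambda>n. L * cmod (z - zs n)) \<longlonglongrightarrow> L * cmod (z - l)"
      by (intro tendsto_intros zl)
    show "norm (gk B l j z - Q) \<le> L * cmod (z - l)"
      by (rule LIMSEQ_le[OF a b]) (use lip z zsin in blast)
  qed
qed


lemma zero_if_small:
  fixes a c d :: real
  assumes d: "d > 0" and h: "\<And>t. 0 < t \<Longrightarrow> t < d \<Longrightarrow> a \<le> c * t"
  shows "a \<le> 0"
proof (rule ccontr)
  assume "\<not> a \<le> 0" hence a: "a > 0" by simp
  define t where "t = min (d/2) (a / (2 * (\<bar>c\<bar> + 1)))"
  have tp: "t > 0" unfolding t_def using a d by (simp add: add_pos_nonneg)
  have td: "t < d" unfolding t_def using d by simp
  have "c * t \<le> \<bar>c\<bar> * t" using tp by (simp add: mult_right_mono)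
  also have "\<dots> \<le> (\<bar>c\<bar> + 1) * t" using tp by (simp add: mult_right_mono)
  also have "\<dots> \<le> (\<bar>c\<bar> + 1) * (a / (2 * (\<bar>c\<bar> + 1)))" unfolding t_def
    by (intro mult_left_mono) auto
  also have "\<dots> = a / 2" by (simp add: field_simps add_pos_nonneg)
  finally have "c * t \<le> a / 2" .
  with h[OF tp td] a show False by simp
qed

lemma gk_zero: "gk B l 0 z = resolvent B z" unfolding gk_def by simp

lemma gk_down:
  assumes "k \<ge> 1" "z \<noteq> l"
  shows "gk B l (k - 1) z = csc (1 / (z - l)) o\<^sub>L gk B l k z"
proof -
  have "1 / (z - l) * (z - l) ^ k = (z - l) ^ (k - 1)"
    using assms by (cases k) (auto simp: field_simps)
  thus ?thesis unfolding gk_def by (simp add: csc_mult flip: bc_assoc)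
qed

lemma resolvent_pole_D:
  assumes "resolvent_pole B l"
  obtains \<epsilon> m C where "\<epsilon> > 0" "l \<in> op_spectrum B" "\<forall>z\<in>ball l \<epsilon> - {l}. in_resolvent_set B z"
    "\<forall>z\<in>ball l \<epsilon> - {l}. norm (gk B l m z) \<le> C"
proof -
  from assms obtain \<epsilon> m C where e: "\<epsilon> > 0" and sp: "op_spectrum B \<inter> ball l \<epsilon> = {l}"
    and b: "\<forall>z\<in>ball l \<epsilon> - {l}. cmod (z - l) ^ m * norm (resolvent B z) \<le> C" and l: "l \<in> op_spectrum B"
    unfolding resolvent_pole_def by blast
  have r: "\<forall>z\<in>ball l \<epsilon> - {l}. in_resolvent_set B z" using sp unfolding op_spectrum_def by blast
  have "norm (gk B l m z) \<le> 2 * C" if z: "z \<in> ball l \<epsilon> - {l}" for z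
  proof -
    have "norm (gk B l m z) \<le> norm (csc ((z - l) ^ m) :: ('a \<times> 'a) \<Rightarrow>\<^sub>L _) * norm (resolvent B z)"
      unfolding gk_def by (rule norm_blinfun_compose)
    also have "\<dots> \<le> (2 * cmod ((z - l) ^ m)) * norm (resolvent B z)" by (intro mult_right_mono norm_csc) auto
    also have "\<dots> = 2 * (cmod (z - l) ^ m * norm (resolvent B z))" by (simp add: norm_power)
    also have "\<dots> \<le> 2 * C" using b z by simp
    finally show ?thesis .
  qed
  thus ?thesis using that[OF e l r] by blast
qed

lemma pole_Q:
  fixes B :: "'a::banach \<Rightarrow>\<^sub>L 'a"
  assumes pole: "resolvent_pole B l"
  shows "\<exists>k Q L \<delta>. k \<ge> 1 \<and> Q \<noteq> 0 \<and> \<delta> > 0 \<and>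
     (\<forall>z\<in>ball l \<delta> - {l}. in_resolvent_set B z \<and> norm (gk B l k z - Q) \<le> L * cmod (z - l))"
proof -
  obtain \<epsilon> m C0 where ep: "\<epsilon> > 0" and lsp: "l \<in> op_spectrum B" and res: "\<forall>z\<in>ball l \<epsilon> - {l}. in_resolvent_set B z"
    and bm: "\<forall>z\<in>ball l \<epsilon> - {l}. norm (gk B l m z) \<le> C0" using resolvent_pole_D[OF pole] by blast
  define good where "good j \<longleftrightarrow> (\<exists>\<delta> C. 0 < \<delta> \<and> \<delta> \<le> \<epsilon> \<and> (\<forall>z\<in>ball l \<delta> - {l}. norm (gk B l j z) \<le> C))" for j
  have gm: "good m" unfolding good_def using ep bm by blast
  define k where "k = (LEAST j. good j)"
  have gk_: "good k" unfolding k_def by (rule LeastI[of good m, OF gm])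
  have notg: "\<not> good j" if "j < k" for j using not_less_Least[of j good] that k_def by blast
  have k1: "k \<ge> 1"
  proof (rule ccontr)
    assume "\<not> k \<ge> 1" hence "k = 0" by simp
    hence "good 0" using gk_ by simp
    then obtain \<delta> C where d: "0 < \<delta>" "\<delta> \<le> \<epsilon>" and bC: "\<forall>z\<in>ball l \<delta> - {l}. norm (resolvent B z) \<le> C"
      unfolding good_def gk_zero by blast
    define t where "t = min (\<delta>/2) (1 / (4 * (\<bar>C\<bar> + 1)))"
    have tp: "t > 0" unfolding t_def using d by (simp add: add_pos_nonneg)
    define z where "z = l + complex_of_real t"
    have dz: "dist l z = t" unfolding z_def using tp by (simp add: dist_norm)
    have "t < \<delta>" unfolding t_def using d by linarith
    hence zin: "z \<in> ball l \<delta> - {l}" using dz tp by auto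
    hence "z \<in> ball l \<epsilon> - {l}" using d by auto
    hence rz: "in_resolvent_set B z" using res by blast
    have c1: "cmod (l - z) = t" using dz by (simp add: dist_norm)
    have "norm (resolvent B z) \<le> C" using bC zin by blast
    hence c2: "norm (resolvent B z) \<le> \<bar>C\<bar>" by linarith
    have "2 * cmod (l - z) * norm (resolvent B z) = (2 * t) * norm (resolvent B z)" by (simp add: c1)
    also have "\<dots> \<le> (2 * t) * \<bar>C\<bar>" by (rule mult_left_mono[OF c2]) (use tp in simp)
    also have "\<dots> \<le> (2 * (1 / (4 * (\<bar>C\<bar> + 1)))) * \<bar>C\<bar>"
    proof (rule mult_right_mono)
      have "t \<le> 1 / (4 * (\<bar>C\<bar> + 1))" unfolding t_def by simp
      thus "2 * t \<le> 2 * (1 / (4 * (\<bar>C\<bar> + 1)))" by simp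
    qed simp
    also have "\<dots> = (2 * \<bar>C\<bar>) / (4 * (\<bar>C\<bar> + 1))" by simp
    also have "\<dots> < 1"
    proof -
      have p: "4 * (\<bar>C\<bar> + 1) > 0" by (simp add: add_nonneg_pos)
      have "2 * \<bar>C\<bar> < 4 * (\<bar>C\<bar> + 1)" by simp
      thus ?thesis using p by (simp add: divide_less_eq)
    qed
    finally have "in_resolvent_set B l" by (rule res_local(1)[OF rz])
    thus False using lsp unfolding op_spectrum_def by simp
  qed
  from gk_ obtain \<delta> C where d: "0 < \<delta>" "\<delta> \<le> \<epsilon>" and bC: "\<forall>z\<in>ball l \<delta> - {l}. norm (gk B l k z) \<le> C"
    unfolding good_def by blast
  have resd: "\<forall>z\<in>ball l \<delta> - {l}. in_resolvent_set B z" using res d by auto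
  obtain Q L where QL: "\<forall>z\<in>ball l (\<delta>/3) - {l}. norm (gk B l k z - Q) \<le> L * cmod (z - l)"
    using pole_limit[OF d(1) resd bC] by blast
  have Qn: "Q \<noteq> 0"
  proof
    assume Q0: "Q = 0"
    have "good (k - 1)" unfolding good_def
    proof (intro exI conjI ballI)
      show "0 < \<delta>/3" "\<delta>/3 \<le> \<epsilon>" using d by auto
      fix z assume z: "z \<in> ball l (\<delta>/3) - {l}"
      hence zl: "z \<noteq> l" by simp
      have "norm (gk B l (k - 1) z) \<le> norm (csc (1 / (z - l)) :: ('a \<times> 'a) \<Rightarrow>\<^sub>L _) * norm (gk B l k z)"
        unfolding gk_down[OF k1 zl] by (rule norm_blinfun_compose)
      also have "\<dots> \<le> (2 * cmod (1 / (z - l))) * (L * cmod (z - l))"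
      proof (rule mult_mono[OF norm_csc])
        show "norm (gk B l k z) \<le> L * cmod (z - l)" using QL z Q0 by force
      qed simp_all
      also have "\<dots> = 2 * L" using zl by (simp add: norm_divide)
      finally show "norm (gk B l (k - 1) z) \<le> 2 * L" .
    qed
    thus False using notg k1 by simp
  qed
  have "\<forall>z\<in>ball l (\<delta>/3) - {l}. in_resolvent_set B z \<and> norm (gk B l k z - Q) \<le> L * cmod (z - l)"
  proof
    fix z assume z: "z \<in> ball l (\<delta>/3) - {l}"
    hence "z \<in> ball l \<delta> - {l}" using d by auto
    thus "in_resolvent_set B z \<and> norm (gk B l k z - Q) \<le> L * cmod (z - l)" using resd QL z by blast
  qed
  moreover have "\<delta>/3 > 0" using d by simp
  ultimately show ?thesis using k1 Qn by blast
qed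


lemma norm3: "norm (a + (b - c)) \<le> norm a + norm b + norm (c::'b::real_normed_vector)"
proof -
  have "norm (a + (b - c)) \<le> norm a + norm (b - c)" by (rule norm_triangle_ineq)
  also have "norm (b - c) \<le> norm b + norm c" by (rule norm_triangle_ineq4)
  finally show ?thesis by simp
qed

lemma X_eq: "CB B - csc l = csc (z - l) - Mop B z"
  unfolding Mop_def csc_diff by (simp add: algebra_simps)

lemma XG_eq:
  assumes r: "in_resolvent_set B z"
  shows "(CB B - csc l) o\<^sub>L gk B l k z = (csc (z - l) o\<^sub>L gk B l k z) - csc ((z - l) ^ k)"
    "gk B l k z o\<^sub>L (CB B - csc l) = (gk B l k z o\<^sub>L csc (z - l)) - csc ((z - l) ^ k)"
    "csc a o\<^sub>L gk B l k z = gk B l k z o\<^sub>L csc a"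
proof -
  have i: "resolvent B z o\<^sub>L Mop B z = id_blinfun" "Mop B z o\<^sub>L resolvent B z = id_blinfun"
    using resolvent_inv[OF r] by (auto simp: is_inv_def)
  have "Mop B z o\<^sub>L gk B l k z = csc ((z - l) ^ k) o\<^sub>L (Mop B z o\<^sub>L resolvent B z)"
    unfolding gk_def by (simp only: Mop_csc_comm flip: bc_assoc)
  thus "(CB B - csc l) o\<^sub>L gk B l k z = (csc (z - l) o\<^sub>L gk B l k z) - csc ((z - l) ^ k)"
    unfolding X_eq[of B l z] using i by (simp add: bc_diff_left)
  have "gk B l k z o\<^sub>L Mop B z = csc ((z - l) ^ k) o\<^sub>L (resolvent B z o\<^sub>L Mop B z)"
    unfolding gk_def by (simp only: bc_assoc)
  thus "gk B l k z o\<^sub>L (CB B - csc l) = (gk B l k z o\<^sub>L csc (z - l)) - csc ((z - l) ^ k)"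
    unfolding X_eq[of B l z] using i by (simp add: bc_diff_right)
  show "csc a o\<^sub>L gk B l k z = gk B l k z o\<^sub>L csc a"
    unfolding gk_def by (simp only: bc_assoc res_comm_csc[OF r]) (simp only: csc_comm flip: bc_assoc)
qed

lemma pole_rel:
  fixes B :: "'a::banach \<Rightarrow>\<^sub>L 'a"
  assumes k1: "k \<ge> 1" and d: "\<delta> > 0"
    and H: "\<forall>z\<in>ball l \<delta> - {l}. in_resolvent_set B z \<and> norm (gk B l k z - Q) \<le> L * cmod (z - l)"
  shows "(CB B - csc l) o\<^sub>L Q = 0" "Q o\<^sub>L (CB B - csc l) = 0" "csc a o\<^sub>L Q = Q o\<^sub>L csc a"
proof -
  define X where "X = CB B - csc l"
  define d' where "d' = min \<delta> 1"
  have d'p: "d' > 0" unfolding d'_def using d by simp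
  have stp: "in_resolvent_set B (l + of_real t) \<and> norm (gk B l k (l + of_real t) - Q) \<le> \<bar>L\<bar> * t
     \<and> norm (gk B l k (l + of_real t)) \<le> norm Q + \<bar>L\<bar> \<and> cmod ((l + of_real t) - l) = t \<and> t ^ k \<le> t"
    if t: "0 < t" "t < d'" for t
  proof -
    let ?z = "l + complex_of_real t"
    have tl: "t < \<delta>" "t < 1" using t unfolding d'_def by auto
    have cz: "cmod (?z - l) = t" using t by simp
    have zin: "?z \<in> ball l \<delta> - {l}" using t tl by (simp add: dist_norm)
    have h: "in_resolvent_set B ?z" "norm (gk B l k ?z - Q) \<le> L * cmod (?z - l)" using H zin by blast+
    note h = h(1) h(2)[unfolded cz]
    have h2: "norm (gk B l k ?z - Q) \<le> \<bar>L\<bar> * t"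
      using h(2) t by (smt (verit) mult_right_mono abs_ge_self)
    have "\<bar>L\<bar> * t \<le> \<bar>L\<bar>" using tl t by (simp add: mult_left_le)
    hence "norm (gk B l k ?z) \<le> norm Q + \<bar>L\<bar>"
      using h2 norm_triangle_ineq2[of "gk B l k ?z" Q] by linarith
    moreover have "t ^ k \<le> t" using power_decreasing[OF k1, of t] t tl by simp
    ultimately show ?thesis using h h2 cz by blast
  qed
  have c1: "norm (X o\<^sub>L Q) \<le> (norm X * \<bar>L\<bar> + 2 * (norm Q + \<bar>L\<bar>) + 2) * t" if t: "0 < t" "t < d'" for t
  proof -
    let ?z = "l + complex_of_real t" let ?G = "gk B l k ?z"
    note s = stp[OF t]
    have "X o\<^sub>L Q = (X o\<^sub>L (Q - ?G)) + ((csc (?z - l) o\<^sub>L ?G) - csc ((?z - l) ^ k))"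
      using XG_eq(1)[OF conjunct1[OF s], where l=l and k=k] unfolding X_def[symmetric] by (simp add: bc_diff_right)
    hence "norm (X o\<^sub>L Q) \<le> norm (X o\<^sub>L (Q - ?G)) + norm (csc (?z - l) o\<^sub>L ?G) + norm (csc ((?z - l) ^ k) :: ('a \<times> 'a) \<Rightarrow>\<^sub>L _)"
      by (simp only: norm3)
    also have "\<dots> \<le> norm X * (\<bar>L\<bar> * t) + (2 * t) * (norm Q + \<bar>L\<bar>) + 2 * t"
    proof (intro add_mono)
      have "norm (X o\<^sub>L (Q - ?G)) \<le> norm X * norm (Q - ?G)" by (rule norm_blinfun_compose)
      also have "\<dots> \<le> norm X * (\<bar>L\<bar> * t)" using s by (intro mult_left_mono) (auto simp: norm_minus_commute)
      finally show "norm (X o\<^sub>L (Q - ?G)) \<le> norm X * (\<bar>L\<bar> * t)" .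
      have "norm (csc (?z - l) o\<^sub>L ?G) \<le> norm (csc (?z - l) :: ('a \<times> 'a) \<Rightarrow>\<^sub>L _) * norm ?G" by (rule norm_blinfun_compose)
      also have "\<dots> \<le> (2 * t) * (norm Q + \<bar>L\<bar>)" using s norm_csc[of "?z - l"] by (intro mult_mono) auto
      finally show "norm (csc (?z - l) o\<^sub>L ?G) \<le> (2 * t) * (norm Q + \<bar>L\<bar>)" .
      have "norm (csc ((?z - l) ^ k) :: ('a \<times> 'a) \<Rightarrow>\<^sub>L _) \<le> 2 * cmod ((?z - l) ^ k)" by (rule norm_csc)
      also have "\<dots> = 2 * t ^ k" using s by (simp add: norm_power)
      also have "\<dots> \<le> 2 * t" using s by simp
      finally show "norm (csc ((?z - l) ^ k) :: ('a \<times> 'a) \<Rightarrow>\<^sub>L _) \<le> 2 * t" .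
    qed
    also have "\<dots> = (norm X * \<bar>L\<bar> + 2 * (norm Q + \<bar>L\<bar>) + 2) * t" by (simp add: algebra_simps)
    finally show ?thesis .
  qed
  have "norm (X o\<^sub>L Q) \<le> 0" by (rule zero_if_small[OF d'p c1])
  thus "(CB B - csc l) o\<^sub>L Q = 0" unfolding X_def by simp
  have c2: "norm (Q o\<^sub>L X) \<le> (norm X * \<bar>L\<bar> + 2 * (norm Q + \<bar>L\<bar>) + 2) * t" if t: "0 < t" "t < d'" for t
  proof -
    let ?z = "l + complex_of_real t" let ?G = "gk B l k ?z"
    note s = stp[OF t]
    have "Q o\<^sub>L X = ((Q - ?G) o\<^sub>L X) + ((?G o\<^sub>L csc (?z - l)) - csc ((?z - l) ^ k))"
      using XG_eq(2)[OF conjunct1[OF s], where l=l and k=k] unfolding X_def[symmetric] by (simp add: bc_diff_left)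
    hence "norm (Q o\<^sub>L X) \<le> norm ((Q - ?G) o\<^sub>L X) + norm (?G o\<^sub>L csc (?z - l)) + norm (csc ((?z - l) ^ k) :: ('a \<times> 'a) \<Rightarrow>\<^sub>L _)"
      by (simp only: norm3)
    also have "\<dots> \<le> (\<bar>L\<bar> * t) * norm X + (norm Q + \<bar>L\<bar>) * (2 * t) + 2 * t"
    proof (intro add_mono)
      have "norm ((Q - ?G) o\<^sub>L X) \<le> norm (Q - ?G) * norm X" by (rule norm_blinfun_compose)
      also have "\<dots> \<le> (\<bar>L\<bar> * t) * norm X" using s by (intro mult_right_mono) (auto simp: norm_minus_commute)
      finally show "norm ((Q - ?G) o\<^sub>L X) \<le> (\<bar>L\<bar> * t) * norm X" .
      have "norm (?G o\<^sub>L csc (?z - l)) \<le> norm ?G * norm (csc (?z - l) :: ('a \<times> 'a) \<Rightarrow>\<^sub>L _)" by (rule norm_blinfun_compose)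
      also have "\<dots> \<le> (norm Q + \<bar>L\<bar>) * (2 * t)" using s norm_csc[of "?z - l"] by (intro mult_mono) auto
      finally show "norm (?G o\<^sub>L csc (?z - l)) \<le> (norm Q + \<bar>L\<bar>) * (2 * t)" .
      have "norm (csc ((?z - l) ^ k) :: ('a \<times> 'a) \<Rightarrow>\<^sub>L _) \<le> 2 * cmod ((?z - l) ^ k)" by (rule norm_csc)
      also have "\<dots> = 2 * t ^ k" using s by (simp add: norm_power)
      also have "\<dots> \<le> 2 * t" using s by simp
      finally show "norm (csc ((?z - l) ^ k) :: ('a \<times> 'a) \<Rightarrow>\<^sub>L _) \<le> 2 * t" .
    qed
    also have "\<dots> = (norm X * \<bar>L\<bar> + 2 * (norm Q + \<bar>L\<bar>) + 2) * t" by (simp add: algebra_simps)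
    finally show ?thesis .
  qed
  have "norm (Q o\<^sub>L X) \<le> 0" by (rule zero_if_small[OF d'p c2])
  thus "Q o\<^sub>L (CB B - csc l) = 0" unfolding X_def by simp
  let ?c = "csc a :: ('a \<times> 'a) \<Rightarrow>\<^sub>L _"
  have c3: "norm ((?c o\<^sub>L Q) - (Q o\<^sub>L ?c)) \<le> (2 * norm ?c * \<bar>L\<bar>) * t" if t: "0 < t" "t < d'" for t
  proof -
    let ?z = "l + complex_of_real t" let ?G = "gk B l k ?z"
    note s = stp[OF t]
    have "(?c o\<^sub>L Q) - (Q o\<^sub>L ?c) = (?c o\<^sub>L (Q - ?G)) - ((Q - ?G) o\<^sub>L ?c)"
      using XG_eq(3)[OF conjunct1[OF s], where a=a and l=l and k=k] by (simp add: bc_diff_left bc_diff_right)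
    hence "norm ((?c o\<^sub>L Q) - (Q o\<^sub>L ?c)) \<le> norm (?c o\<^sub>L (Q - ?G)) + norm ((Q - ?G) o\<^sub>L ?c)"
      by (simp add: norm_triangle_ineq4)
    also have "\<dots> \<le> norm ?c * (\<bar>L\<bar> * t) + (\<bar>L\<bar> * t) * norm ?c"
    proof (intro add_mono)
      have "norm (?c o\<^sub>L (Q - ?G)) \<le> norm ?c * norm (Q - ?G)" by (rule norm_blinfun_compose)
      also have "\<dots> \<le> norm ?c * (\<bar>L\<bar> * t)" using s by (intro mult_left_mono) (auto simp: norm_minus_commute)
      finally show "norm (?c o\<^sub>L (Q - ?G)) \<le> norm ?c * (\<bar>L\<bar> * t)" .
      have "norm ((Q - ?G) o\<^sub>L ?c) \<le> norm (Q - ?G) * norm ?c" by (rule norm_blinfun_compose)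
      also have "\<dots> \<le> (\<bar>L\<bar> * t) * norm ?c" using s by (intro mult_right_mono) (auto simp: norm_minus_commute)
      finally show "norm ((Q - ?G) o\<^sub>L ?c) \<le> (\<bar>L\<bar> * t) * norm ?c" .
    qed
    also have "\<dots> = (2 * norm ?c * \<bar>L\<bar>) * t" by (simp add: algebra_simps)
    finally show ?thesis .
  qed
  have "norm ((?c o\<^sub>L Q) - (Q o\<^sub>L ?c)) \<le> 0" by (rule zero_if_small[OF d'p c3])
  thus "csc a o\<^sub>L Q = Q o\<^sub>L csc a" by simp
qed


definition cone_ok :: "'a::real_normed_vector set \<Rightarrow> bool" where
  "cone_ok K \<longleftrightarrow> closed K \<and> 0 \<in> K \<and> (\<forall>x y. x \<in> K \<longrightarrow> y \<in> K \<longrightarrow> x + y \<in> K) \<and>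
     (\<forall>c x. c \<ge> 0 \<longrightarrow> x \<in> K \<longrightarrow> c *\<^sub>R x \<in> K)"

definition pres :: "'a::banach set \<Rightarrow> (('a \<times> 'a) \<Rightarrow>\<^sub>L ('a \<times> 'a)) \<Rightarrow> bool" where
  "pres K S \<longleftrightarrow> (\<forall>x\<in>K. blinfun_apply S (x, 0) \<in> K \<times> {0})"

lemma pres_comp: "pres K S \<Longrightarrow> pres K T \<Longrightarrow> pres K (S o\<^sub>L T)"
  unfolding pres_def by force

lemma pres_id: "pres K id_blinfun" unfolding pres_def by simp

lemma pres_scale: "cone_ok K \<Longrightarrow> c \<ge> 0 \<Longrightarrow> pres K S \<Longrightarrow> pres K (c *\<^sub>R S)"
  unfolding pres_def cone_ok_def by (force simp: blinfun.scaleR_left)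

lemma pres_opow: "pres K S \<Longrightarrow> pres K (opow S n)"
  by (induction n) (auto intro: pres_comp pres_id)

lemma pres_suminf:
  assumes K: "cone_ok K" and su: "summable f" and P: "\<And>n. pres K (f n)"
  shows "pres K (suminf f)"
  unfolding pres_def
proof
  fix x assume x: "x \<in> K"
  have cl: "closed (K \<times> {0::'a})" using K unfolding cone_ok_def by (intro closed_Times) auto
  have z: "0 \<in> K \<times> {0::'a}" using K unfolding cone_ok_def by (simp add: zero_prod_def)
  have ad: "\<And>u v. u \<in> K \<times> {0::'a} \<Longrightarrow> v \<in> K \<times> {0} \<Longrightarrow> u + v \<in> K \<times> {0}"
    using K unfolding cone_ok_def by auto
  show "blinfun_apply (suminf f) (x, 0) \<in> K \<times> {0}"
    by (rule suminf_preserves[OF su cl z ad]) (use P x in \<open>auto simp: pres_def\<close>)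
qed

lemma pres_CB: "(\<forall>x\<in>K. blinfun_apply B x \<in> K) \<Longrightarrow> pres K (CB B)"
  unfolding pres_def by simp

lemma pres_csc_real: "cone_ok K \<Longrightarrow> c \<ge> 0 \<Longrightarrow> pres K (csc (complex_of_real c))"
  unfolding csc_real by (rule pres_scale) (auto intro: pres_id)

lemma res_large:
  fixes B :: "'a::banach \<Rightarrow>\<^sub>L 'a"
  assumes K: "cone_ok K" and pB: "pres K (CB B)" and t: "t > 2 * norm (CB B)" "t > 0"
  shows "in_resolvent_set B (complex_of_real t) \<and> pres K (resolvent B (complex_of_real t))"
proof -
  let ?S = "csc (complex_of_real (1/t)) :: ('a \<times> 'a) \<Rightarrow>\<^sub>L _"
  have inv: "is_inv (csc (complex_of_real t)) ?S" unfolding is_inv_def using t by (simp add: csc_mult flip: of_real_mult)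
  have "norm ?S * norm (CB B) \<le> (2 * cmod (complex_of_real (1/t))) * norm (CB B)"
    by (intro mult_right_mono norm_csc) auto
  also have "\<dots> = (2 * norm (CB B)) / t" using t by (simp add: norm_divide)
  also have "\<dots> < 1" using t by (simp add: divide_less_eq)
  finally have sm: "norm ?S * norm (CB B) < 1" .
  note P = perturb[OF inv sm]
  have i: "is_inv (Mop B (complex_of_real t)) (suminf (opow (?S o\<^sub>L CB B)) o\<^sub>L ?S)"
    using P(1) unfolding Mop_def .
  hence r: "in_resolvent_set B (complex_of_real t)" using in_res_iff by blast
  have eq: "resolvent B (complex_of_real t) = suminf (\<lambda>n. opow (?S o\<^sub>L CB B) n o\<^sub>L ?S)"
    using resolvent_eq[OF i] P(3) by simp
  have pS: "pres K ?S" using t by (intro pres_csc_real K) simp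
  have "pres K (suminf (\<lambda>n. opow (?S o\<^sub>L CB B) n o\<^sub>L ?S))"
    by (rule pres_suminf[OF K P(4)]) (intro pres_comp pres_opow pS pB)
  thus ?thesis using r eq by simp
qed

lemma res_step_down:
  fixes B :: "'a::banach \<Rightarrow>\<^sub>L 'a"
  assumes K: "cone_ok K" and r: "in_resolvent_set B (complex_of_real t)" and p: "pres K (resolvent B (complex_of_real t))"
    and st: "s \<le> t" and sm: "2 * (t - s) * norm (resolvent B (complex_of_real t)) < 1"
  shows "in_resolvent_set B (complex_of_real s) \<and> pres K (resolvent B (complex_of_real s))"
proof -
  have c: "cmod (complex_of_real s - complex_of_real t) = t - s"
    using st by (simp flip: of_real_diff)
  have sm': "2 * cmod (complex_of_real s - complex_of_real t) * norm (resolvent B (complex_of_real t)) < 1"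
    unfolding c by (rule sm)
  note L = res_local[OF r sm']
  have pD: "pres K (csc (complex_of_real t - complex_of_real s) :: ('a \<times> 'a) \<Rightarrow>\<^sub>L _)"
    unfolding of_real_diff[symmetric] by (rule pres_csc_real[OF K]) (use st in simp)
  have "pres K (suminf (\<lambda>n. opow (resolvent B (complex_of_real t) o\<^sub>L csc (complex_of_real t - complex_of_real s)) n o\<^sub>L resolvent B (complex_of_real t)))"
    by (rule pres_suminf[OF K L(4)]) (intro pres_comp pres_opow p pD)
  thus ?thesis using L(1) L(3) by simp
qed

lemma real_above_res:
  assumes "t > op_spectral_radius B" shows "in_resolvent_set B (complex_of_real t)"
  by (rule above_radius_res) (use assms in auto)

lemma res_pos:
  fixes B :: "'a::banach \<Rightarrow>\<^sub>L 'a"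
  assumes K: "cone_ok K" and pB: "pres K (CB B)" and t0: "t0 > op_spectral_radius B"
  shows "pres K (resolvent B (complex_of_real t0))"
proof (rule ccontr)
  assume np: "\<not> pres K (resolvent B (complex_of_real t0))"
  let ?R = "\<lambda>t. resolvent B (complex_of_real t)"
  define Sb where "Sb = {t. t \<ge> t0 \<and> \<not> pres K (?R t)}"
  define T1 where "T1 = max t0 (2 * norm (CB B)) + 1"
  have ne: "Sb \<noteq> {}" using np unfolding Sb_def by auto
  have ub: "t < T1" if "t \<in> Sb" for t
  proof (rule ccontr)
    assume "\<not> t < T1"
    moreover have "T1 \<ge> 2 * norm (CB B) + 1" unfolding T1_def by simp
    moreover have "0 \<le> norm (CB B)" by simp
    ultimately have "t > 2 * norm (CB B)" "t > 0" by linarith+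
    hence "pres K (?R t)" using res_large[OF K pB] by blast
    thus False using that Sb_def by simp
  qed
  have bdd: "bdd_above Sb" unfolding bdd_above_def using ub less_imp_le by blast
  define s where "s = Sup Sb"
  have s_ge: "t \<le> s" if "t \<in> Sb" for t unfolding s_def by (rule cSup_upper[OF that bdd])
  have st0: "s \<ge> t0" using s_ge ne Sb_def by fastforce
  have rs: "in_resolvent_set B (complex_of_real s)" using st0 t0 by (intro real_above_res) simp
  define \<rho> where "\<rho> = norm (?R s)"
  have \<rho>0: "\<rho> \<ge> 0" unfolding \<rho>_def by simp
  define \<eta> where "\<eta> = 1 / (8 * (\<rho> + 1))"
  have \<eta>p: "\<eta> > 0" unfolding \<eta>_def using \<rho>0 by (simp add: add_nonneg_pos)
  have \<eta>\<rho>: "\<eta> * (2 * \<rho> + 1) < 1"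
  proof -
    have "\<eta> * (2 * \<rho> + 1) = (2 * \<rho> + 1) / (8 * (\<rho> + 1))" unfolding \<eta>_def by simp
    also have "\<dots> < 1" using \<rho>0 by (simp add: divide_less_eq)
    finally show ?thesis .
  qed
  show False
  proof (cases "pres K (?R s)")
    case True
    obtain t where t: "t \<in> Sb" "s - \<eta> < t" using less_cSupE[of "s - \<eta>" Sb] ne \<eta>p unfolding s_def by auto
    have ts: "t \<le> s" using s_ge t by simp
    have "2 * (s - t) * \<rho> \<le> 2 * \<eta> * \<rho>" using t \<rho>0 by (intro mult_right_mono) auto
    also have "\<dots> \<le> \<eta> * (2 * \<rho> + 1)" using \<eta>p by (simp add: algebra_simps)
    also have "\<dots> < 1" by (rule \<eta>\<rho>)
    finally have "2 * (s - t) * norm (?R s) < 1" unfolding \<rho>_def .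
    hence "pres K (?R t)" using res_step_down[OF K rs True ts] by blast
    thus False using t Sb_def by simp
  next
    case False
    define t where "t = s + \<eta> / 2"
    have ts: "s \<le> t" "t > s" using \<eta>p unfolding t_def by auto
    have tnot: "t \<notin> Sb" using s_ge ts by force
    hence pt: "pres K (?R t)" using ts st0 Sb_def by simp
    have rt: "in_resolvent_set B (complex_of_real t)" using ts st0 t0 by (intro real_above_res) simp
    have c: "cmod (complex_of_real t - complex_of_real s) = \<eta> / 2"
      using \<eta>p unfolding t_def by (simp flip: of_real_diff)
    have c2: "cmod (complex_of_real t - complex_of_real s) < 1 / (4 * (\<rho> + 1))"
    proof -
      have "\<eta> / 2 = 1 / (16 * (\<rho> + 1))" unfolding \<eta>_def by simp
      also have "\<dots> < 1 / (4 * (\<rho> + 1))" using \<rho>0 by (intro divide_strict_left_mono) (auto simp: add_nonneg_pos)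
      finally show ?thesis using c by simp
    qed
    have "norm (?R t - ?R s) \<le> 4 * \<rho> ^ 2 * cmod (complex_of_real t - complex_of_real s)"
      using res_local_bound(2)[OF rs] c2 unfolding \<rho>_def by blast
    also have "\<dots> = 4 * \<rho> ^ 2 * (\<eta> / 2)" using c by simp
    also have "\<dots> = \<rho> ^ 2 / (4 * (\<rho> + 1))"
    proof -
      have h: "\<rho> + 1 \<noteq> 0" using \<rho>0 by simp
      show ?thesis unfolding \<eta>_def using h by (simp add: field_simps)
    qed
    also have "\<dots> \<le> \<rho> + 1"
    proof -
      have "\<rho> ^ 2 \<le> (4 * (\<rho> + 1)) * (\<rho> + 1)" using \<rho>0 by (simp add: power2_eq_square algebra_simps)
      thus ?thesis using \<rho>0 by (simp add: divide_le_eq add_nonneg_pos mult.commute)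
    qed
    finally have "norm (?R t - ?R s) \<le> \<rho> + 1" .
    hence nRt: "norm (?R t) \<le> 2 * \<rho> + 1" using norm_triangle_ineq2[of "?R t" "?R s"] unfolding \<rho>_def by linarith
    have "2 * (t - s) * norm (?R t) = \<eta> * norm (?R t)" unfolding t_def by simp
    also have "\<dots> \<le> \<eta> * (2 * \<rho> + 1)" using nRt \<eta>p by (intro mult_left_mono) auto
    also have "\<dots> < 1" by (rule \<eta>\<rho>)
    finally have "pres K (?R s)" using res_step_down[OF K rt pt ts(1)] by blast
    thus False using False by simp
  qed
qed


lemma Jo_csc: "Jo = csc \<i>"
  by (rule blinfun_eqI) (simp add: csc_apply Jo_apply)

lemma pres_snd:
  assumes p: "pres K S" and gen: "\<forall>x. \<exists>u\<in>K. \<exists>v\<in>K. x = u - v"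
  shows "snd (blinfun_apply S (x, 0)) = 0"
proof -
  obtain u v where uv: "u \<in> K" "v \<in> K" "x = u - v" using gen by blast
  have e: "(x, 0) = (u, 0) - (v, 0::'a)" using uv by simp
  have "blinfun_apply S ((u, 0) - (v, 0)) = blinfun_apply S (u, 0) - blinfun_apply S (v, 0)" by (rule blinfun.diff_right)
  hence "blinfun_apply S (x, 0) = blinfun_apply S (u, 0) - blinfun_apply S (v, 0)" by (simp only: e)
  moreover have "snd (blinfun_apply S (u, 0)) = 0" "snd (blinfun_apply S (v, 0)) = 0"
    using p uv unfolding pres_def by (auto simp: mem_Times_iff)
  ultimately show ?thesis by simp
qed

lemma bl_realpart: "bounded_linear (\<lambda>x. fst (blinfun_apply (Q :: ('a::banach \<times> 'a) \<Rightarrow>\<^sub>L _) (x, 0)))"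
proof -
  have "bounded_linear (\<lambda>x::'a. (x, 0::'a))" by (intro bounded_linear_Pair bounded_linear_ident bounded_linear_zero)
  hence "bounded_linear (\<lambda>x. blinfun_apply Q (x, 0::'a))" by (rule bounded_linear_compose[OF blinfun.bounded_linear_right])
  thus ?thesis by (rule bounded_linear_compose[OF bounded_linear_fst])
qed

definition realpart :: "(('a::banach \<times> 'a) \<Rightarrow>\<^sub>L ('a \<times> 'a)) \<Rightarrow> 'a \<Rightarrow>\<^sub>L 'a" where
  "realpart Q = Blinfun (\<lambda>x. fst (blinfun_apply Q (x, 0)))"

lemma realpart_apply: "blinfun_apply (realpart Q) x = fst (blinfun_apply Q (x, 0))"
  unfolding realpart_def bounded_linear_Blinfun_apply[OF bl_realpart] ..

lemma realpart_eq:
  assumes p: "pres K S" and gen: "\<forall>x. \<exists>u\<in>K. \<exists>v\<in>K. x = u - v"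
  shows "blinfun_apply S (x, 0) = (blinfun_apply (realpart S) x, 0)"
  using pres_snd[OF p gen, of x] by (simp add: realpart_apply prod_eq_iff)

lemma eigen_from_pole:
  fixes B :: "'a::banach \<Rightarrow>\<^sub>L 'a"
  assumes K: "cone_ok K" and gen: "\<forall>x. \<exists>u\<in>K. \<exists>v\<in>K. x = u - v" and pos: "\<forall>x\<in>K. blinfun_apply B x \<in> K"
    and pole: "resolvent_pole B (complex_of_real (op_spectral_radius B))"
  shows "\<exists>P. P \<noteq> 0 \<and> (\<forall>x\<in>K. blinfun_apply P x \<in> K) \<and>
     (\<forall>x. blinfun_apply B (blinfun_apply P x) = op_spectral_radius B *\<^sub>R blinfun_apply P x) \<and>
     (\<forall>x. blinfun_apply P (blinfun_apply B x) = op_spectral_radius B *\<^sub>R blinfun_apply P x)"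
proof -
  define r where "r = op_spectral_radius B"
  define l where "l = complex_of_real r"
  obtain k Q L \<delta> where k1: "k \<ge> 1" and Qn: "Q \<noteq> 0" and d: "\<delta> > 0"
    and H: "\<forall>z\<in>ball l \<delta> - {l}. in_resolvent_set B z \<and> norm (gk B l k z - Q) \<le> L * cmod (z - l)"
    using pole_Q[OF pole[folded r_def, folded l_def]] by blast
  note rel = pole_rel[OF k1 d H]
  have pB: "pres K (CB B)" using pos by (rule pres_CB)
  have Kc: "closed (K \<times> {0::'a})" "K \<times> {0::'a} \<noteq> {}" using K unfolding cone_ok_def by (auto intro: closed_Times)
  have pQ: "pres K Q" unfolding pres_def
  proof
    fix x assume x: "x \<in> K"
    have "infdist (blinfun_apply Q (x, 0)) (K \<times> {0}) \<le> 0"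
    proof (rule zero_if_small[OF d])
      fix t assume t: "0 < t" "t < \<delta>"
      define z where "z = l + complex_of_real t"
      have zl: "z - l = complex_of_real t" unfolding z_def by simp
      have zr: "z = complex_of_real (r + t)" unfolding z_def l_def by simp
      have zin: "z \<in> ball l \<delta> - {l}" using t unfolding z_def by (simp add: dist_norm)
      have "norm (gk B l k z - Q) \<le> L * cmod (z - l)" using H zin by blast
      moreover have "cmod (z - l) = t" using zl t by simp
      ultimately have Hz: "norm (gk B l k z - Q) \<le> L * t" by simp
      have pz: "pres K (resolvent B z)" unfolding zr r_def by (rule res_pos[OF K pB]) (use t r_def in simp)
      have "pres K (csc (complex_of_real (t ^ k)))" by (rule pres_csc_real[OF K]) (use t in simp)
      hence "pres K (csc ((z - l) ^ k))" unfolding zl by (simp only: of_real_power)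
      hence "pres K (gk B l k z)" unfolding gk_def using pz by (rule pres_comp)
      hence mem: "blinfun_apply (gk B l k z) (x, 0) \<in> K \<times> {0}" using x unfolding pres_def by blast
      have "infdist (blinfun_apply Q (x, 0)) (K \<times> {0}) \<le> dist (blinfun_apply Q (x, 0)) (blinfun_apply (gk B l k z) (x, 0))"
        by (rule infdist_le[OF mem])
      also have "\<dots> = norm (blinfun_apply (gk B l k z - Q) (x, 0))"
        by (simp add: dist_norm blinfun.diff_left norm_minus_commute)
      also have "\<dots> \<le> norm (gk B l k z - Q) * norm (x, 0::'a)" by (rule norm_blinfun)
      also have "\<dots> \<le> (L * t) * norm x"
      proof -
        have "norm (x, 0::'a) = norm x" by (simp add: norm_Pair)
        thus ?thesis using Hz by (simp add: mult_right_mono)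
      qed
      finally show "infdist (blinfun_apply Q (x, 0)) (K \<times> {0}) \<le> (L * norm x) * t" by (simp add: algebra_simps)
    qed
    hence "infdist (blinfun_apply Q (x, 0)) (K \<times> {0}) = 0" using infdist_nonneg by (metis order_antisym)
    thus "blinfun_apply Q (x, 0) \<in> K \<times> {0}" using in_closed_iff_infdist_zero[OF Kc] by blast
  qed
  define P where "P = realpart Q"
  have Qx0: "blinfun_apply Q (x, 0) = (blinfun_apply P x, 0)" for x unfolding P_def by (rule realpart_eq[OF pQ gen])
  have Q0y: "blinfun_apply Q (0, y) = (0, blinfun_apply P y)" for y
  proof -
    have "(0, y) = blinfun_apply Jo (y, 0)" by (simp add: Jo_apply)
    hence "blinfun_apply Q (0, y) = blinfun_apply (Q o\<^sub>L csc \<i>) (y, 0)" by (simp add: Jo_csc)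
    also have "\<dots> = blinfun_apply (csc \<i> o\<^sub>L Q) (y, 0)" using rel(3)[of \<i>] by simp
    also have "\<dots> = blinfun_apply Jo (blinfun_apply P y, 0)" by (simp add: Qx0 Jo_csc)
    finally show ?thesis by (simp add: Jo_apply)
  qed
  have Qxy: "blinfun_apply Q (x, y) = (blinfun_apply P x, blinfun_apply P y)" for x y
  proof -
    have "(x, y) = (x, 0) + (0, y)" by simp
    hence "blinfun_apply Q (x, y) = blinfun_apply Q (x, 0) + blinfun_apply Q (0, y)" by (metis blinfun.add_right)
    thus ?thesis by (simp add: Qx0 Q0y)
  qed
  have Pn: "P \<noteq> 0"
  proof
    assume "P = 0"
    hence "Q = 0" by (intro blinfun_eqI) (auto simp: Qxy prod_eq_iff)
    thus False using Qn by simp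
  qed
  have Ppos: "\<forall>x\<in>K. blinfun_apply P x \<in> K" using pQ Qx0 unfolding pres_def by auto
  have ev1: "blinfun_apply B (blinfun_apply P x) = r *\<^sub>R blinfun_apply P x" for x
  proof -
    have "blinfun_apply ((CB B - csc l) o\<^sub>L Q) (x, 0) = 0" using rel(1) by simp
    hence "fst (blinfun_apply (CB B - csc l) (blinfun_apply P x, 0)) = 0" by (simp add: Qx0)
    thus ?thesis unfolding l_def csc_real by (simp add: blinfun.diff_left blinfun.scaleR_left)
  qed
  have ev2: "blinfun_apply P (blinfun_apply B x) = r *\<^sub>R blinfun_apply P x" for x
  proof -
    have "blinfun_apply (Q o\<^sub>L (CB B - csc l)) (x, 0) = 0" using rel(2) by simp
    moreover have "blinfun_apply (CB B - csc l) (x, 0) = (blinfun_apply B x - r *\<^sub>R x, 0)"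
      unfolding l_def csc_real by (simp add: blinfun.diff_left blinfun.scaleR_left)
    ultimately have "blinfun_apply P (blinfun_apply B x - r *\<^sub>R x) = 0" by (simp add: Qx0 zero_prod_def)
    thus ?thesis by (simp add: blinfun.diff_right blinfun.scaleR_right)
  qed
  show ?thesis using Pn Ppos ev1 ev2 r_def by blast
qed

lemma op_inverse_res:
  fixes T :: "'a::banach \<Rightarrow>\<^sub>L 'a"
  assumes K: "cone_ok K" and gen: "\<forall>x. \<exists>u\<in>K. \<exists>v\<in>K. x = u - v" and pos: "\<forall>x\<in>K. blinfun_apply T x \<in> K"
    and rT: "op_spectral_radius T < 1"
  shows "(\<forall>x\<in>K. blinfun_apply (op_inverse (id_blinfun - T)) x \<in> K) \<and>
     op_inverse (id_blinfun - T) o\<^sub>L (id_blinfun - T) = id_blinfun \<and> (id_blinfun - T) o\<^sub>L op_inverse (id_blinfun - T) = id_blinfun"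
proof -
  have r1: "in_resolvent_set T 1" using real_above_res[OF rT] by simp
  have p1: "pres K (resolvent T 1)" using res_pos[OF K pres_CB[OF pos] rT] by simp
  let ?R = "resolvent T 1" and ?M = "Mop T 1"
  define W where "W = realpart ?R"
  have RW: "blinfun_apply ?R (x, 0) = (blinfun_apply W x, 0)" for x unfolding W_def by (rule realpart_eq[OF p1 gen])
  have i: "?R o\<^sub>L ?M = id_blinfun" "?M o\<^sub>L ?R = id_blinfun" using resolvent_inv[OF r1] by (auto simp: is_inv_def)
  have Mx: "blinfun_apply ?M (x, 0) = (x - blinfun_apply T x, 0)" for x
    unfolding Mop_def by (simp add: blinfun.diff_left csc_apply)
  have a: "W o\<^sub>L (id_blinfun - T) = id_blinfun"
  proof (rule blinfun_eqI)
    fix x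
    have "blinfun_apply (?R o\<^sub>L ?M) (x, 0) = (x, 0)" using i by simp
    hence "blinfun_apply ?R (x - blinfun_apply T x, 0) = (x, 0)" by (simp add: Mx)
    thus "blinfun_apply (W o\<^sub>L (id_blinfun - T)) x = blinfun_apply id_blinfun x"
      by (simp add: RW blinfun.diff_left)
  qed
  have b: "(id_blinfun - T) o\<^sub>L W = id_blinfun"
  proof (rule blinfun_eqI)
    fix x
    have "blinfun_apply (?M o\<^sub>L ?R) (x, 0) = (x, 0)" using i by simp
    hence "blinfun_apply W x - blinfun_apply T (blinfun_apply W x) = x" by (simp add: RW Mx)
    thus "blinfun_apply ((id_blinfun - T) o\<^sub>L W) x = blinfun_apply id_blinfun x"
      by (simp add: blinfun.diff_left)
  qed
  have "op_inverse (id_blinfun - T) = W"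
    unfolding op_inverse_def
  proof (rule some_equality)
    show "W o\<^sub>L (id_blinfun - T) = id_blinfun \<and> (id_blinfun - T) o\<^sub>L W = id_blinfun" using a b by simp
    fix S assume "S o\<^sub>L (id_blinfun - T) = id_blinfun \<and> (id_blinfun - T) o\<^sub>L S = id_blinfun"
    thus "S = W" using inverse_unique[of S "id_blinfun - T" W] b by simp
  qed
  moreover have "\<forall>x\<in>K. blinfun_apply W x \<in> K" using p1 RW unfolding pres_def by auto
  ultimately show ?thesis using a b by simp
qed


lemma cone_okI:
  assumes c: "is_cone K" and g: "generating_cone K"
  shows "cone_ok K"
proof -
  have cl: "closed K" and cv: "convex K" and sc: "\<And>x \<alpha>. x \<in> K \<Longrightarrow> \<alpha> \<ge> 0 \<Longrightarrow> \<alpha> *\<^sub>R x \<in> K"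
    using c unfolding is_cone_def by auto
  obtain u v where "u \<in> K" "v \<in> K" "(0::'a) = u - v" using g unfolding generating_cone_def by blast
  hence z: "0 \<in> K" using sc[of u 0] by simp
  have ad: "x + y \<in> K" if "x \<in> K" "y \<in> K" for x y
  proof -
    have "(1/2) *\<^sub>R x + (1/2) *\<^sub>R y \<in> K" using convexD[OF cv that, of "1/2" "1/2"] by simp
    hence "2 *\<^sub>R ((1/2) *\<^sub>R x + (1/2) *\<^sub>R y) \<in> K" using sc by simp
    thus ?thesis by (simp add: scaleR_add_right)
  qed
  show ?thesis unfolding cone_ok_def using cl z ad sc by blast
qed

lemma iter_eig:
  fixes f :: "'a::real_normed_vector \<Rightarrow>\<^sub>L real"
  assumes "\<And>z. blinfun_apply f (blinfun_apply A z) = c * blinfun_apply f z"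
  shows "blinfun_apply f ((blinfun_apply A ^^ n) x) = c ^ n * blinfun_apply f x"
  by (induction n) (simp_all add: assms mult.assoc)

lemma iter_vec:
  assumes "blinfun_apply A x = c *\<^sub>R x"
  shows "(blinfun_apply A ^^ n) x = c ^ n *\<^sub>R x"
  by (induction n) (simp_all add: assms blinfun.scaleR_right)

lemma pos_fun_zero:
  assumes gen: "\<forall>x. \<exists>u\<in>K. \<exists>v\<in>K. x = u - v" and z: "\<forall>u\<in>K. blinfun_apply P u = 0"
  shows "P = 0"
proof (rule blinfun_eqI)
  fix x obtain u v where "u \<in> K" "v \<in> K" "x = u - v" using gen by blast
  thus "blinfun_apply P x = blinfun_apply 0 x" using z by (simp add: blinfun.diff_right)
qed

lemma sep_pos:
  assumes K: "cone_ok K" and pt: "\<forall>x. x \<in> K \<and> - x \<in> K \<longrightarrow> x = 0" and w: "w \<in> K" "w \<noteq> 0"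
  shows "\<exists>\<phi>::'a::real_normed_vector \<Rightarrow>\<^sub>L real. (\<forall>k\<in>K. blinfun_apply \<phi> k \<ge> 0) \<and> blinfun_apply \<phi> w > 0"
proof -
  have "- w \<notin> K" using pt w by blast
  then obtain \<phi> :: "'a \<Rightarrow>\<^sub>L real" where "\<forall>k\<in>K. blinfun_apply \<phi> k \<ge> 0" "blinfun_apply \<phi> (- w) < 0"
    using hb_cone_sep[of K "- w"] K unfolding cone_ok_def by blast
  thus ?thesis by (intro exI[of _ \<phi>]) (simp add: blinfun.minus_right)
qed

lemma pos_fac: "x * a > (0::real) \<Longrightarrow> a > 0 \<Longrightarrow> x > 0"
  by (auto simp: zero_less_mult_iff)

lemma neg_fac: "x * a < (0::real) \<Longrightarrow> a > 0 \<Longrightarrow> x < 0"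
  by (auto simp: mult_less_0_iff)

theorem theorem3p7:
  fixes K :: "'a::banach set" and A T F :: "'a \<Rightarrow>\<^sub>L 'a"
  assumes "is_cone K" and "generating_cone K" and "normal_cone K"
    and "positive_op K A" and "semi_nonsupporting K A"
    and "resolvent_pole A (complex_of_real (op_spectral_radius A))"
    and "A = T + F"
    and "positive_op K T" and "positive_op K F"
    and "op_spectral_radius T < 1" and "T \<noteq> 0"
    and "op_spectral_radius (F o\<^sub>L op_inverse (id_blinfun - T)) > 0"
    and "resolvent_pole (F o\<^sub>L op_inverse (id_blinfun - T))
           (complex_of_real (op_spectral_radius (F o\<^sub>L op_inverse (id_blinfun - T))))"
  shows "let R0 = op_spectral_radius (F o\<^sub>L op_inverse (id_blinfun - T)); rA = op_spectral_radius A;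
             Pa = (R0 > rA \<and> rA > 1); Pb = (R0 = rA \<and> rA = 1); Pc = (R0 < rA \<and> rA < 1)
         in (Pa \<or> Pb \<or> Pc) \<and> \<not> (Pa \<and> Pb) \<and> \<not> (Pa \<and> Pc) \<and> \<not> (Pb \<and> Pc)"
proof -
  note asm = assms
  have K: "cone_ok K" by (rule cone_okI[OF asm(1,2)])
  have gen: "\<forall>x. \<exists>u\<in>K. \<exists>v\<in>K. x = u - v" using asm(2) unfolding generating_cone_def .
  have pt: "\<forall>x. x \<in> K \<and> - x \<in> K \<longrightarrow> x = 0" using asm(1) unfolding is_cone_def by blast
  have Kad: "\<And>x y. x \<in> K \<Longrightarrow> y \<in> K \<Longrightarrow> x + y \<in> K" using K unfolding cone_ok_def by blast
  have pA: "\<forall>x\<in>K. blinfun_apply A x \<in> K" using asm(4) unfolding positive_op_def .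
  have pT: "\<forall>x\<in>K. blinfun_apply T x \<in> K" using asm(8) unfolding positive_op_def .
  have pF: "\<forall>x\<in>K. blinfun_apply F x \<in> K" using asm(9) unfolding positive_op_def .
  have sns: "\<And>x f. x \<in> K \<Longrightarrow> x \<noteq> 0 \<Longrightarrow> f \<in> dual_cone K \<Longrightarrow> f \<noteq> 0 \<Longrightarrow>
      \<exists>n. n \<ge> 1 \<and> blinfun_apply f ((blinfun_apply A ^^ n) x) > 0"
    using asm(5) unfolding semi_nonsupporting_def by blast
  define W where "W = op_inverse (id_blinfun - T)"
  define G where "G = F o\<^sub>L W"
  define lA where "lA = op_spectral_radius A"
  define \<mu> where "\<mu> = op_spectral_radius G"
  have Wf: "(\<forall>x\<in>K. blinfun_apply W x \<in> K) \<and> W o\<^sub>L (id_blinfun - T) = id_blinfun \<and> (id_blinfun - T) o\<^sub>L W = id_blinfun"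
    unfolding W_def by (rule op_inverse_res[OF K gen pT asm(10)])
  have pG: "\<forall>x\<in>K. blinfun_apply G x \<in> K" using Wf pF unfolding G_def by simp
  obtain PA where PAn: "PA \<noteq> 0" and PApos: "\<forall>x\<in>K. blinfun_apply PA x \<in> K"
    and PAr: "\<forall>x. blinfun_apply PA (blinfun_apply A x) = lA *\<^sub>R blinfun_apply PA x"
    using eigen_from_pole[OF K gen pA asm(6)] unfolding lA_def by blast
  obtain x1 where x1: "x1 \<in> K" "blinfun_apply PA x1 \<noteq> 0" using pos_fun_zero[OF gen] PAn by blast
  obtain \<phi> :: "'a \<Rightarrow>\<^sub>L real" where \<phi>: "\<forall>k\<in>K. blinfun_apply \<phi> k \<ge> 0" "blinfun_apply \<phi> (blinfun_apply PA x1) > 0"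
    using sep_pos[OF K pt PApos[rule_format, OF x1(1)] x1(2)] by blast
  define f where "f = \<phi> o\<^sub>L PA"
  have fK: "f \<in> dual_cone K" unfolding dual_cone_def f_def using \<phi>(1) PApos by simp
  have fn: "f \<noteq> 0"
  proof
    assume "f = 0"
    hence "blinfun_apply f x1 = 0" by simp
    thus False using \<phi>(2) unfolding f_def by simp
  qed
  have fA: "blinfun_apply f (blinfun_apply A z) = lA * blinfun_apply f z" for z
    unfolding f_def using PAr by (simp add: blinfun.scaleR_right)
  have fpos: "blinfun_apply f z > 0" if zz: "z \<in> K" "z \<noteq> 0" for z
  proof -
    obtain n where "n \<ge> 1" "blinfun_apply f ((blinfun_apply A ^^ n) z) > 0" using sns[OF zz fK fn] by blast
    hence "lA ^ n * blinfun_apply f z > 0" using iter_eig[of f A lA, OF fA] by simp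
    moreover have "blinfun_apply f z \<ge> 0" using fK zz unfolding dual_cone_def by blast
    ultimately show ?thesis by (cases "blinfun_apply f z = 0") auto
  qed
  obtain PG where PGn: "PG \<noteq> 0" and PGpos: "\<forall>x\<in>K. blinfun_apply PG x \<in> K"
    and PGr: "\<forall>x. blinfun_apply G (blinfun_apply PG x) = \<mu> *\<^sub>R blinfun_apply PG x"
    using eigen_from_pole[OF K gen pG asm(13)[folded W_def, folded G_def]] unfolding \<mu>_def by blast
  obtain x2 where x2: "x2 \<in> K" "blinfun_apply PG x2 \<noteq> 0" using pos_fun_zero[OF gen] PGn by blast
  define y where "y = blinfun_apply PG x2"
  have yK: "y \<in> K" "y \<noteq> 0" using x2 PGpos unfolding y_def by auto
  have Gy: "blinfun_apply G y = \<mu> *\<^sub>R y" using PGr unfolding y_def by blast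
  define x where "x = blinfun_apply W y"
  have xK: "x \<in> K" using Wf yK unfolding x_def by blast
  have xTx: "x - blinfun_apply T x = y"
  proof -
    have "blinfun_apply ((id_blinfun - T) o\<^sub>L W) y = y" using Wf by simp
    thus ?thesis unfolding x_def by (simp add: blinfun.diff_left)
  qed
  have x0: "x \<noteq> 0" using xTx yK by auto
  have Fx: "blinfun_apply F x = \<mu> *\<^sub>R y" using Gy unfolding G_def x_def by simp
  have Ax: "blinfun_apply A x = blinfun_apply T x + \<mu> *\<^sub>R y" using Fx asm(7) by (simp add: blinfun.add_left)
  have Tx0: "blinfun_apply T x \<noteq> 0"
  proof
    assume Tx: "blinfun_apply T x = 0"
    hence yx: "y = x" using xTx by simp
    have Axm: "blinfun_apply A x = \<mu> *\<^sub>R x" using Ax Tx yx by simp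
    have "\<forall>u\<in>K. blinfun_apply T u = 0"
    proof (rule ballI, rule ccontr)
      fix u assume u: "u \<in> K" "blinfun_apply T u \<noteq> 0"
      obtain \<psi> :: "'a \<Rightarrow>\<^sub>L real" where \<psi>: "\<forall>k\<in>K. blinfun_apply \<psi> k \<ge> 0" "blinfun_apply \<psi> (blinfun_apply T u) > 0"
        using sep_pos[OF K pt pT[rule_format, OF u(1)] u(2)] by blast
      define h where "h = \<psi> o\<^sub>L T"
      have hK: "h \<in> dual_cone K" unfolding dual_cone_def h_def using \<psi>(1) pT by simp
      have hn: "h \<noteq> 0"
      proof
        assume "h = 0" hence "blinfun_apply h u = 0" by simp
        thus False using \<psi>(2) unfolding h_def by simp
      qed
      obtain n where "n \<ge> 1" "blinfun_apply h ((blinfun_apply A ^^ n) x) > 0" using sns[OF xK x0 hK hn] by blast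
      moreover have "blinfun_apply h ((blinfun_apply A ^^ n) x) = 0"
        using iter_vec[OF Axm, of n] Tx unfolding h_def by (simp add: blinfun.scaleR_right)
      ultimately show False by simp
    qed
    hence "T = 0" by (rule pos_fun_zero[OF gen])
    thus False using asm(11) by simp
  qed
  define a where "a = blinfun_apply f x"
  define b where "b = blinfun_apply f (blinfun_apply T x)"
  define c where "c = blinfun_apply f y"
  have a0: "a > 0" unfolding a_def using fpos xK x0 by blast
  have b0: "b > 0" unfolding b_def using fpos pT xK Tx0 by blast
  have c0: "c > 0" unfolding c_def using fpos yK by blast
  have cab: "c = a - b" unfolding a_def b_def c_def using xTx[symmetric] by (simp add: blinfun.diff_right)
  have e1: "lA * a = b + \<mu> * c"
  proof -
    have "lA * a = blinfun_apply f (blinfun_apply A x)" unfolding a_def using fA by simp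
    also have "\<dots> = b + \<mu> * c" unfolding b_def c_def Ax by (simp add: blinfun.add_right blinfun.scaleR_right)
    finally show ?thesis .
  qed
  have mc: "\<mu> * c = \<mu> * a - \<mu> * b" using cab by (simp add: right_diff_distrib)
  have "lA * a - \<mu> * a = b - \<mu> * b" using e1 mc by linarith
  hence eq1: "(lA - \<mu>) * a = (1 - \<mu>) * b" by (simp add: algebra_simps)
  have "a - lA * a = c - \<mu> * c" using e1 cab by linarith
  hence eq2: "(1 - lA) * a = (1 - \<mu>) * c" by (simp add: algebra_simps)
  have res: "(\<mu> > lA \<and> lA > 1) \<or> (\<mu> = lA \<and> lA = 1) \<or> (\<mu> < lA \<and> lA < 1)"
  proof (cases "\<mu>" "1::real" rule: linorder_cases)
    case less
    have "(1 - \<mu>) * c > 0" using less c0 by simp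
    hence "(1 - lA) * a > 0" using eq2 by simp
    hence "1 - lA > 0" by (rule pos_fac[OF _ a0])
    hence l1: "lA < 1" by simp
    have "(1 - \<mu>) * b > 0" using less b0 by simp
    hence "(lA - \<mu>) * a > 0" using eq1 by simp
    hence "lA - \<mu> > 0" by (rule pos_fac[OF _ a0])
    hence "lA > \<mu>" by simp
    thus ?thesis using l1 by simp
  next
    case equal
    hence "(1 - lA) * a = 0" using eq2 by simp
    hence "lA = 1" using a0 by simp
    thus ?thesis using equal by simp
  next
    case greater
    have "(1 - \<mu>) * c < 0" using greater c0 by (simp add: mult_less_0_iff)
    hence "(1 - lA) * a < 0" using eq2 by simp
    hence "1 - lA < 0" by (rule neg_fac[OF _ a0])
    hence l1: "lA > 1" by simp
    have "(1 - \<mu>) * b < 0" using greater b0 by (simp add: mult_less_0_iff)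
    hence "(lA - \<mu>) * a < 0" using eq1 by simp
    hence "lA - \<mu> < 0" by (rule neg_fac[OF _ a0])
    hence "lA < \<mu>" by simp
    thus ?thesis using l1 by simp
  qed
  have e\<mu>: "op_spectral_radius (F o\<^sub>L op_inverse (id_blinfun - T)) = \<mu>" unfolding \<mu>_def G_def W_def ..
  have eA: "op_spectral_radius A = lA" unfolding lA_def ..
  show ?thesis unfolding Let_def e\<mu> eA
  proof -
    from res show "(lA < \<mu> \<and> 1 < lA \<or> \<mu> = lA \<and> lA = 1 \<or> \<mu> < lA \<and> lA < 1) \<and>
      \<not> ((lA < \<mu> \<and> 1 < lA) \<and> \<mu> = lA \<and> lA = 1) \<and>
      \<not> ((lA < \<mu> \<and> 1 < lA) \<and> \<mu> < lA \<and> lA < 1) \<and> \<not> ((\<mu> = lA \<and> lA = 1) \<and> \<mu> < lA \<and> lA < 1)"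
      by linarith
  qed
qed


end
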